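(* (Sparse F5 criterion.) Let $I^h\subset\mathbb{K}[S_M^h]$ be a homogeneous ideal, $G^h$ a sparse Gröbner basis of $I^h$ with respect to $\prec_h$ consisting of homogeneous polynomials, $D\in\mathbb{N}$, and let $\mathcal{M}'_D$ be the matrix defined below. Let $d\in\mathbb{N}$ and $\mathfrak{b}=\{X^{(s,D-d)}\in\mathbb{K}[S_M^h]_{D-d}:\text{there is no }g\in G^h\text{ with }\mathrm{LM}_{\prec_h}(g)\mid_\delta X^{(s,D-d)}\}$. Let $f\in\mathbb{K}[S_M^h]_d$ and let $\mathcal{M}^*_D$ be the Macaulay matrix obtained by appending to $\mathcal{M}'_D$ the rows indexed by $\{X^{(s,D-d)}\cdot f: X^{(s,D-d)}\in\mathfrak{b}\}$. Let $\widetilde{\mathcal{M}^*_D}$ be its reduced row echelon form, and let $\widetilde{\mathcal{M}_D}$ be the reduced row echelon form of the Macaulay matrix $\mathcal{M}_D$ with columns all monomials of $\mathbb{K}[S_M^h]_D$ in decreasing $\prec_h$-order and rows all products $X^{(u,D-\deg h)}\cdot h$ with $h\in G^h\cup\{f\}$ and $X^{(u,D-\deg h)}$ a monomial of $\mathbb{K}[S_M^h]_{D-\deg h}$. Then $\mathrm{Rows}(\widetilde{\mathcal{M}^*_D})=\mathrm{Rows}(\widetilde{\mathcal{M}_D})$. Moreover, if $f$ is not a zero-divisor in $\mathbb{K}[S_M^h]/I^h$, then $\mathcal{M}^*_D$ is full-rank.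
   Context: Let $\mathbb{K}$ be a field of characteristic $0$, $M\subset\mathbb{R}^n$ a polytope with $0\in M$, $S_M\subset\mathbb{Z}^n$ the affine semigroup generated by $M\cap\mathbb{Z}^n$ and $S_M^h\subset\mathbb{Z}^{n+1}$ the one generated by $\{(s,1):s\in M\cap\mathbb{Z}^n\}$, both assumed pointed. $\mathbb{K}[S]$ is the semigroup algebra with monomials $X^s$, $X^sX^t=X^{s+t}$; $\mathbb{K}[S_M^h]$ is graded by $\deg X^{(s,d)}=d$, $\mathbb{K}[S_M^h]_d$ is the degree-$d$ part. $\chi:\mathbb{K}[S_M^h]\to\mathbb{K}[S_M]$, $X^{(s,d)}\mapsto X^s$. The affine degree $\delta^A(X^s)$ is the least $d$ with $(s,d)\in S_M^h$, extended to polynomials by the maximum over the support; the sparse degree of $f\in\mathbb{K}[S_M^h]$ is $\delta(f)=\delta^A(\chi(f))$. Fix a monomial order $<_M$ on $\mathbb{K}[S_M]$; the sparse order is $X^s\prec X^r$ iff $\delta^A(X^s)<\delta^A(X^r)$, or equality and $X^s<_MX^r$; the graded sparse order is $X^{(s,d)}\prec_hX^{(r,d')}$ iff $d<d'$, or $d=d'$ and $X^s\prec X^r$. Divisibility: $X^{(s,d_s)}\mid_\delta X^{(r,d_r)}$ if some monomial $X^{(t,d_t)}$ satisfies $X^{(s,d_s)}X^{(t,d_t)}=X^{(r,d_r)}$ and $\delta(X^{(s,d_s)})+\delta(X^{(t,d_t)})=\delta(X^{(r,d_r)})$. A sparse Gröbner basis of $I^h$ w.r.t. $\prec_h$ is a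 subset of $I^h$ generating $I^h$ such that every nonzero $f\in I^h$ has some element $g$ of it with $\mathrm{LM}_{\prec_h}(g)\mid_\delta\mathrm{LM}_{\prec_h}(f)$. A Macaulay matrix has columns indexed by monomials and rows indexed by polynomials, entry = coefficient; $\mathrm{Rows}(\mathcal{M})$ is the set of nonzero polynomials represented by its rows. The matrix $\mathcal{M}'_D$: let $\mathcal{N}$ be the set of monomials of $\mathbb{K}[S_M^h]_D$ divisible (in the sense $\mid_\delta$) by $\mathrm{LM}_{\prec_h}(g)$ for some $g\in G^h$; associate to each $X^{(s,D)}\in\mathcal{N}$ exactly one such $g$, and let $\mathcal{R}$ be the set of products $X^t g$ where $X^t\,\mathrm{LM}_{\prec_h}(g)=X^{(s,D)}$ with $\delta(X^t)+\delta(\mathrm{LM}_{\prec_h}(g))=\delta(X^{(s,D)})$; $\mathcal{M}'_D$ has columns all monomials of $\mathbb{K}[S_M^h]_D$ in decreasing $\prec_h$-order and rows indexed by $\mathcal{R}$. *)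

theory Defs
  imports "HOL-Library.Poly_Mapping" "HOL-Library.Product_Plus"
          "Jordan_Normal_Form.DL_Rank" "Jordan_Normal_Form.Gauss_Jordan_Elimination"
begin

text \<open>Z^n is encoded as finitely supported maps nat =>0 int whose support lies in {..<n};
  R^n as maps nat => real vanishing outside {..<n}.  Exponents of K[S_M^h] live in
  Z^n x Z (the last coordinate is the homogenising degree).\<close>

type_synonym zvec = "nat \<Rightarrow>\<^sub>0 int"
type_synonym hmon = "zvec \<times> int"

definition in_Rn :: "nat \<Rightarrow> (nat \<Rightarrow> real) \<Rightarrow> bool" where
  "in_Rn n x \<longleftrightarrow> (\<forall>i\<ge>n. x i = 0)"

definition polytope :: "nat \<Rightarrow> (nat \<Rightarrow> real) set \<Rightarrow> bool" where
  "polytope n M \<longleftrightarrow> (\<exists>V. finite V \<and> V \<noteq> {} \<and> (\<forall>v\<in>V. in_Rn n v) \<and>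
     M = {x. \<exists>u. (\<forall>v\<in>V. 0 \<le> u v) \<and> sum u V = 1 \<and> x = (\<lambda>i. \<Sum>v\<in>V. u v * v i)})"

definition lattice_pts :: "nat \<Rightarrow> (nat \<Rightarrow> real) set \<Rightarrow> zvec set" where
  "lattice_pts n M = {s. Poly_Mapping.keys s \<subseteq> {..<n} \<and> (\<lambda>i. real_of_int (Poly_Mapping.lookup s i)) \<in> M}"

inductive_set SM :: "nat \<Rightarrow> (nat \<Rightarrow> real) set \<Rightarrow> zvec set" for n M where
  SM_zero: "0 \<in> SM n M"
| SM_add: "s \<in> lattice_pts n M \<Longrightarrow> t \<in> SM n M \<Longrightarrow> s + t \<in> SM n M"

inductive_set SMh :: "nat \<Rightarrow> (nat \<Rightarrow> real) set \<Rightarrow> hmon set" for n M where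
  SMh_zero: "0 \<in> SMh n M"
| SMh_add: "s \<in> lattice_pts n M \<Longrightarrow> t \<in> SMh n M \<Longrightarrow> (s, 1) + t \<in> SMh n M"

definition pointed :: "'a::ab_group_add set \<Rightarrow> bool" where
  "pointed S \<longleftrightarrow> (\<forall>x\<in>S. - x \<in> S \<longrightarrow> x = 0)"

definition aff_deg :: "nat \<Rightarrow> (nat \<Rightarrow> real) set \<Rightarrow> zvec \<Rightarrow> nat" where
  "aff_deg n M s = (LEAST d. (s, int d) \<in> SMh n M)"

definition sdeg :: "nat \<Rightarrow> (nat \<Rightarrow> real) set \<Rightarrow> hmon \<Rightarrow> nat" where
  "sdeg n M m = aff_deg n M (fst m)"

definition monomial_order :: "nat \<Rightarrow> (nat \<Rightarrow> real) set \<Rightarrow> (zvec \<Rightarrow> zvec \<Rightarrow> bool) \<Rightarrow> bool" where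
  "monomial_order n M lt \<longleftrightarrow>
     (\<forall>s\<in>SM n M. \<not> lt s s) \<and>
     (\<forall>s\<in>SM n M. \<forall>t\<in>SM n M. \<forall>u\<in>SM n M. lt s t \<longrightarrow> lt t u \<longrightarrow> lt s u) \<and>
     (\<forall>s\<in>SM n M. \<forall>t\<in>SM n M. s \<noteq> t \<longrightarrow> lt s t \<or> lt t s) \<and>
     (\<forall>s\<in>SM n M. \<forall>t\<in>SM n M. \<forall>r\<in>SM n M. lt s t \<longrightarrow> lt (s + r) (t + r)) \<and>
     \<not> (\<exists>f. \<forall>i. f i \<in> SM n M \<and> lt (f (Suc i)) (f i))"

definition sparse_less :: "nat \<Rightarrow> (nat \<Rightarrow> real) set \<Rightarrow> (zvec \<Rightarrow> zvec \<Rightarrow> bool) \<Rightarrow> zvec \<Rightarrow> zvec \<Rightarrow> bool" where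
  "sparse_less n M lt s r \<longleftrightarrow>
     aff_deg n M s < aff_deg n M r \<or> (aff_deg n M s = aff_deg n M r \<and> lt s r)"

definition hless :: "nat \<Rightarrow> (nat \<Rightarrow> real) set \<Rightarrow> (zvec \<Rightarrow> zvec \<Rightarrow> bool) \<Rightarrow> hmon \<Rightarrow> hmon \<Rightarrow> bool" where
  "hless n M lt a b \<longleftrightarrow>
     snd a < snd b \<or> (snd a = snd b \<and> sparse_less n M lt (fst a) (fst b))"

definition LM :: "nat \<Rightarrow> (nat \<Rightarrow> real) set \<Rightarrow> (zvec \<Rightarrow> zvec \<Rightarrow> bool) \<Rightarrow> (hmon \<Rightarrow>\<^sub>0 'k::zero) \<Rightarrow> hmon" where
  "LM n M lt g = (THE m. m \<in> Poly_Mapping.keys g \<and> (\<forall>m'\<in>Poly_Mapping.keys g. m' \<noteq> m \<longrightarrow> hless n M lt m' m))"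

definition ddvd :: "nat \<Rightarrow> (nat \<Rightarrow> real) set \<Rightarrow> hmon \<Rightarrow> hmon \<Rightarrow> bool" where
  "ddvd n M a b \<longleftrightarrow> (\<exists>t\<in>SMh n M. a + t = b \<and> sdeg n M a + sdeg n M t = sdeg n M b)"

definition hring :: "nat \<Rightarrow> (nat \<Rightarrow> real) set \<Rightarrow> (hmon \<Rightarrow>\<^sub>0 'k::zero) set" where
  "hring n M = {p. Poly_Mapping.keys p \<subseteq> SMh n M}"

definition xmon :: "hmon \<Rightarrow> (hmon \<Rightarrow>\<^sub>0 'k::{zero,one})" where
  "xmon m = Poly_Mapping.single m 1"

definition is_homog :: "nat \<Rightarrow> (hmon \<Rightarrow>\<^sub>0 'k::zero) \<Rightarrow> bool" where
  "is_homog d p \<longleftrightarrow> (\<forall>m\<in>Poly_Mapping.keys p. snd m = int d)"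

definition homogeneous :: "(hmon \<Rightarrow>\<^sub>0 'k::zero) \<Rightarrow> bool" where
  "homogeneous p \<longleftrightarrow> (\<exists>d. is_homog d p)"

definition hpart :: "nat \<Rightarrow> (nat \<Rightarrow> real) set \<Rightarrow> nat \<Rightarrow> (hmon \<Rightarrow>\<^sub>0 'k::zero) set" where
  "hpart n M d = {p \<in> hring n M. is_homog d p}"

definition hcomp :: "int \<Rightarrow> (hmon \<Rightarrow>\<^sub>0 'k::comm_monoid_add) \<Rightarrow> (hmon \<Rightarrow>\<^sub>0 'k)" where
  "hcomp d p = (\<Sum>m\<in>{m\<in>Poly_Mapping.keys p. snd m = d}. Poly_Mapping.single m (Poly_Mapping.lookup p m))"

definition is_ideal :: "nat \<Rightarrow> (nat \<Rightarrow> real) set \<Rightarrow> (hmon \<Rightarrow>\<^sub>0 'k::comm_ring_1) set \<Rightarrow> bool" where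
  "is_ideal n M I \<longleftrightarrow> I \<subseteq> hring n M \<and> 0 \<in> I \<and> (\<forall>p\<in>I. \<forall>q\<in>I. p + q \<in> I) \<and>
     (\<forall>r\<in>hring n M. \<forall>p\<in>I. r * p \<in> I)"

definition homog_ideal :: "nat \<Rightarrow> (nat \<Rightarrow> real) set \<Rightarrow> (hmon \<Rightarrow>\<^sub>0 'k::comm_ring_1) set \<Rightarrow> bool" where
  "homog_ideal n M I \<longleftrightarrow> is_ideal n M I \<and> (\<forall>p\<in>I. \<forall>d. hcomp d p \<in> I)"

definition ideal_gen :: "nat \<Rightarrow> (nat \<Rightarrow> real) set \<Rightarrow> (hmon \<Rightarrow>\<^sub>0 'k::comm_ring_1) set \<Rightarrow> (hmon \<Rightarrow>\<^sub>0 'k) set" where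
  "ideal_gen n M G = \<Inter>{J. is_ideal n M J \<and> G \<subseteq> J}"

definition sparse_GB :: "nat \<Rightarrow> (nat \<Rightarrow> real) set \<Rightarrow> (zvec \<Rightarrow> zvec \<Rightarrow> bool) \<Rightarrow>
    (hmon \<Rightarrow>\<^sub>0 'k::comm_ring_1) set \<Rightarrow> (hmon \<Rightarrow>\<^sub>0 'k) set \<Rightarrow> bool" where
  "sparse_GB n M lt I G \<longleftrightarrow> G \<subseteq> I \<and> ideal_gen n M G = I \<and>
     (\<forall>f\<in>I. f \<noteq> 0 \<longrightarrow> (\<exists>g\<in>G. g \<noteq> 0 \<and> ddvd n M (LM n M lt g) (LM n M lt f)))"

definition nonzerodivisor_mod :: "nat \<Rightarrow> (nat \<Rightarrow> real) set \<Rightarrow> (hmon \<Rightarrow>\<^sub>0 'k::comm_ring_1) set \<Rightarrow> (hmon \<Rightarrow>\<^sub>0 'k) \<Rightarrow> bool" where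
  "nonzerodivisor_mod n M I f \<longleftrightarrow> (\<forall>q\<in>hring n M. f * q \<in> I \<longrightarrow> q \<in> I)"

definition mons :: "nat \<Rightarrow> (nat \<Rightarrow> real) set \<Rightarrow> nat \<Rightarrow> hmon set" where
  "mons n M D = {m \<in> SMh n M. snd m = int D}"

definition col_list :: "nat \<Rightarrow> (nat \<Rightarrow> real) set \<Rightarrow> (zvec \<Rightarrow> zvec \<Rightarrow> bool) \<Rightarrow> nat \<Rightarrow> hmon list" where
  "col_list n M lt D = (THE xs. set xs = mons n M D \<and> sorted_wrt (\<lambda>a b. hless n M lt b a) xs)"

definition macaulay :: "hmon list \<Rightarrow> (hmon \<Rightarrow>\<^sub>0 'k::zero) list \<Rightarrow> 'k mat" where
  "macaulay cs rs = mat (length rs) (length cs) (\<lambda>(i, j). Poly_Mapping.lookup (rs ! i) (cs ! j))"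

definition enum_set :: "'a set \<Rightarrow> 'a list" where
  "enum_set R = (SOME rs. distinct rs \<and> set rs = R)"

definition Rows :: "hmon list \<Rightarrow> 'k::comm_monoid_add mat \<Rightarrow> (hmon \<Rightarrow>\<^sub>0 'k) set" where
  "Rows cs A = {p. p \<noteq> 0 \<and> (\<exists>i<dim_row A.
      p = (\<Sum>j<dim_col A. Poly_Mapping.single (cs ! j) (A $$ (i, j))))}"

definition rref :: "'k::field mat \<Rightarrow> 'k mat" where
  "rref A = gauss_jordan_single A"

definition full_rank :: "'k::field mat \<Rightarrow> bool" where
  "full_rank A \<longleftrightarrow> vec_space.rank (dim_row A) A = min (dim_row A) (dim_col A)"


definition Nset :: "nat \<Rightarrow> (nat \<Rightarrow> real) set \<Rightarrow> (zvec \<Rightarrow> zvec \<Rightarrow> bool) \<Rightarrow>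
    (hmon \<Rightarrow>\<^sub>0 'k::zero) set \<Rightarrow> nat \<Rightarrow> hmon set" where
  "Nset n M lt G D = {m\<in>mons n M D. \<exists>g\<in>G. g \<noteq> 0 \<and> ddvd n M (LM n M lt g) m}"

text \<open>R: rows of M'_D, for a choice phi of one g per element of N.\<close>
definition Rset :: "nat \<Rightarrow> (nat \<Rightarrow> real) set \<Rightarrow> (zvec \<Rightarrow> zvec \<Rightarrow> bool) \<Rightarrow>
    (hmon \<Rightarrow>\<^sub>0 'k::comm_ring_1) set \<Rightarrow> nat \<Rightarrow> (hmon \<Rightarrow> (hmon \<Rightarrow>\<^sub>0 'k)) \<Rightarrow> (hmon \<Rightarrow>\<^sub>0 'k) set" where
  "Rset n M lt G D \<phi> = {xmon t * \<phi> m | m t. m \<in> Nset n M lt G D \<and> t \<in> SMh n M \<and>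
      t + LM n M lt (\<phi> m) = m \<and> sdeg n M t + sdeg n M (LM n M lt (\<phi> m)) = sdeg n M m}"

text \<open>The set b of standard monomials of degree D - d (empty if d > D).\<close>
definition bset :: "nat \<Rightarrow> (nat \<Rightarrow> real) set \<Rightarrow> (zvec \<Rightarrow> zvec \<Rightarrow> bool) \<Rightarrow>
    (hmon \<Rightarrow>\<^sub>0 'k::zero) set \<Rightarrow> nat \<Rightarrow> nat \<Rightarrow> hmon set" where
  "bset n M lt G D d = {m\<in>SMh n M. snd m + int d = int D \<and>
      \<not> (\<exists>g\<in>G. g \<noteq> 0 \<and> ddvd n M (LM n M lt g) m)}"

definition M'_mat where
  "M'_mat n M lt G D \<phi> = macaulay (col_list n M lt D) (enum_set (Rset n M lt G D \<phi>))"

definition Mstar_mat where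
  "Mstar_mat n M lt G D \<phi> d f = macaulay (col_list n M lt D)
     (enum_set (Rset n M lt G D \<phi>) @ enum_set {xmon s * f | s. s \<in> bset n M lt G D d})"

definition MD_mat where
  "MD_mat n M lt G D f = macaulay (col_list n M lt D)
     (enum_set {xmon u * h | u h e. h \<in> G \<union> {f} \<and> is_homog e h \<and>
                   u \<in> SMh n M \<and> snd u + int e = int D})"

end

theory Submission
  imports Defs
begin


lemma lookup_single_mult:
  fixes g :: "hmon \<Rightarrow>\<^sub>0 'k::field"
  shows "Poly_Mapping.lookup (Poly_Mapping.single t c * g) k = c * Poly_Mapping.lookup g (k - t)"
proof transfer
  fix t :: hmon and c :: 'k and g k
  have e: "\<And>a. (k = t + a) = (a = k - t)" by (auto simp: algebra_simps)
  have "(\<Sum>a. (c when t = a) * (\<Sum>q. g q when k = a + q)) = (\<Sum>a. (c * (\<Sum>q. g q when k = a + q)) when t = a)"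
    by (rule Sum_any.cong) (simp add: when_def)
  also have "\<dots> = c * (\<Sum>q. g q when k = t + q)" by (rule Sum_any_when_equal')
  also have "(\<Sum>q. g q when k = t + q) = (\<Sum>q. g q when q = k - t)" by (simp add: e)
  also have "\<dots> = g (k - t)" by (rule Sum_any_when_equal)
  finally show "prod_fun (\<lambda>k'. c when t = k') g k = c * g (k - t)" by (simp add: prod_fun_def)
qed

lemma SMh_add: "a \<in> SMh n M \<Longrightarrow> b \<in> SMh n M \<Longrightarrow> a + b \<in> SMh n M"
  by (induction a rule: SMh.induct) (auto simp: add.assoc intro: SMh.intros)

lemma SMh_snd: "a \<in> SMh n M \<Longrightarrow> snd a \<ge> 0"
  by (induction a rule: SMh.induct) auto

lemma SMh_fst: "a \<in> SMh n M \<Longrightarrow> fst a \<in> SM n M"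
  by (induction a rule: SMh.induct) (auto intro: SM.intros)

lemma SM_SMh: "s \<in> SM n M \<Longrightarrow> \<exists>k. (s, k) \<in> SMh n M"
proof (induction s rule: SM.induct)
  case SM_zero
  then show ?case using SMh.SMh_zero by (metis zero_prod_def)
next
  case (SM_add s t)
  then obtain k where "(t, k) \<in> SMh n M" by blast
  from SMh.SMh_add[OF SM_add(1) this] show ?case by auto
qed

lemma aff_deg_mem: "s \<in> SM n M \<Longrightarrow> (s, int (aff_deg n M s)) \<in> SMh n M"
proof -
  assume "s \<in> SM n M"
  then obtain k where k: "(s, k) \<in> SMh n M" using SM_SMh by blast
  then have "k \<ge> 0" using SMh_snd by fastforce
  then have "(s, int (nat k)) \<in> SMh n M" using k by simp
  then show ?thesis unfolding aff_deg_def by (rule LeastI)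
qed

lemma aff_deg_le: "(s, int k) \<in> SMh n M \<Longrightarrow> aff_deg n M s \<le> k"
  unfolding aff_deg_def by (rule Least_le)

lemma aff_deg_subadd:
  assumes "s \<in> SM n M" "t \<in> SM n M"
  shows "aff_deg n M (s + t) \<le> aff_deg n M s + aff_deg n M t"
proof -
  have "(s, int (aff_deg n M s)) + (t, int (aff_deg n M t)) \<in> SMh n M"
    using SMh_add aff_deg_mem assms by blast
  then show ?thesis using aff_deg_le by fastforce
qed

section \<open>The graded sparse order\<close>

lemma mo_irrefl: "monomial_order n M lt \<Longrightarrow> s \<in> SM n M \<Longrightarrow> \<not> lt s s"
  unfolding monomial_order_def by blast
lemma mo_trans: "monomial_order n M lt \<Longrightarrow> s \<in> SM n M \<Longrightarrow> t \<in> SM n M \<Longrightarrow> u \<in> SM n M \<Longrightarrow> lt s t \<Longrightarrow> lt t u \<Longrightarrow> lt s u"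
  unfolding monomial_order_def by blast
lemma mo_total: "monomial_order n M lt \<Longrightarrow> s \<in> SM n M \<Longrightarrow> t \<in> SM n M \<Longrightarrow> s \<noteq> t \<Longrightarrow> lt s t \<or> lt t s"
  unfolding monomial_order_def by blast
lemma mo_add: "monomial_order n M lt \<Longrightarrow> s \<in> SM n M \<Longrightarrow> t \<in> SM n M \<Longrightarrow> r \<in> SM n M \<Longrightarrow> lt s t \<Longrightarrow> lt (s + r) (t + r)"
  unfolding monomial_order_def by blast

lemma hless_irrefl: "monomial_order n M lt \<Longrightarrow> a \<in> SMh n M \<Longrightarrow> \<not> hless n M lt a a"
  unfolding hless_def sparse_less_def using mo_irrefl SMh_fst by blast

lemma hless_trans:
  assumes mo: "monomial_order n M lt" and ab: "a \<in> SMh n M" "b \<in> SMh n M" "c \<in> SMh n M"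
    and "hless n M lt a b" "hless n M lt b c"
  shows "hless n M lt a c"
proof -
  have f: "fst a \<in> SM n M" "fst b \<in> SM n M" "fst c \<in> SM n M" using ab SMh_fst by auto
  show ?thesis using assms(5,6) mo_trans[OF mo f] unfolding hless_def sparse_less_def by auto
qed

lemma hless_asym: "monomial_order n M lt \<Longrightarrow> a \<in> SMh n M \<Longrightarrow> b \<in> SMh n M \<Longrightarrow>
   hless n M lt a b \<Longrightarrow> \<not> hless n M lt b a"
  using hless_trans hless_irrefl by blast

lemma hless_total:
  assumes mo: "monomial_order n M lt" and ab: "a \<in> SMh n M" "b \<in> SMh n M" and ne: "a \<noteq> b"
  shows "hless n M lt a b \<or> hless n M lt b a"
proof -
  have f: "fst a \<in> SM n M" "fst b \<in> SM n M" using ab SMh_fst by auto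
  show ?thesis
  proof (cases "snd a = snd b")
    case True
    then have "fst a \<noteq> fst b" using ne prod_eqI by blast
    then show ?thesis using mo_total[OF mo f] True unfolding hless_def sparse_less_def by auto
  next
    case False
    then show ?thesis unfolding hless_def by auto
  qed
qed

lemma hless_shift:
  assumes mo: "monomial_order n M lt" and ab: "a \<in> SMh n M" "b \<in> SMh n M" "t \<in> SMh n M"
    and snd: "snd a = snd b" and ba: "hless n M lt b a"
    and deg: "sdeg n M t + sdeg n M a = sdeg n M (t + a)"
  shows "hless n M lt (t + b) (t + a)"
proof -
  have f: "fst a \<in> SM n M" "fst b \<in> SM n M" "fst t \<in> SM n M" using ab SMh_fst by auto
  have sl: "sparse_less n M lt (fst b) (fst a)" using ba snd unfolding hless_def by auto
  have sub: "aff_deg n M (fst t + fst b) \<le> aff_deg n M (fst t) + aff_deg n M (fst b)"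
    using aff_deg_subadd f by blast
  have deg': "aff_deg n M (fst t) + aff_deg n M (fst a) = aff_deg n M (fst t + fst a)"
    using deg unfolding sdeg_def by simp
  show ?thesis
  proof (cases "aff_deg n M (fst b) < aff_deg n M (fst a)")
    case True
    then show ?thesis using sub deg' unfolding hless_def sparse_less_def by (simp add: snd)
  next
    case False
    then have eq: "aff_deg n M (fst b) = aff_deg n M (fst a)" and l: "lt (fst b) (fst a)"
      using sl unfolding sparse_less_def by auto
    have "lt (fst b + fst t) (fst a + fst t)" using mo_add[OF mo f(2,1,3) l] .
    then have "lt (fst t + fst b) (fst t + fst a)" by (simp add: add.commute)
    moreover have "aff_deg n M (fst t + fst b) < aff_deg n M (fst t + fst a)
       \<or> aff_deg n M (fst t + fst b) = aff_deg n M (fst t + fst a)"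
      using sub deg' eq by linarith
    ultimately show ?thesis unfolding hless_def sparse_less_def by (auto simp: snd)
  qed
qed

section \<open>Leading monomials\<close>

lemma finite_max:
  assumes mo: "monomial_order n M lt"
  shows "finite X \<Longrightarrow> X \<noteq> {} \<Longrightarrow> X \<subseteq> SMh n M \<Longrightarrow> \<exists>m\<in>X. \<forall>m'\<in>X. m' \<noteq> m \<longrightarrow> hless n M lt m' m"
proof (induction X rule: finite_ne_induct)
  case (singleton x)
  then show ?case by auto
next
  case (insert x F)
  then obtain m where m: "m \<in> F" "\<forall>m'\<in>F. m' \<noteq> m \<longrightarrow> hless n M lt m' m" by auto
  have xs: "x \<in> SMh n M" "m \<in> SMh n M" "F \<subseteq> SMh n M" using insert m by auto
  show ?case
  proof (cases "hless n M lt m x")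
    case True
    have "\<forall>m'\<in>insert x F. m' \<noteq> x \<longrightarrow> hless n M lt m' x"
    proof (intro ballI impI)
      fix m' assume "m' \<in> insert x F" "m' \<noteq> x"
      then have "m' \<in> F" by auto
      show "hless n M lt m' x"
      proof (cases "m' = m")
        case True
        then show ?thesis using \<open>hless n M lt m x\<close> by simp
      next
        case False
        then have "hless n M lt m' m" using m \<open>m' \<in> F\<close> by auto
        moreover have "m' \<in> SMh n M" using xs(3) \<open>m' \<in> F\<close> by auto
        ultimately show ?thesis using hless_trans[OF mo _ xs(2) xs(1)] \<open>hless n M lt m x\<close> by blast
      qed
    qed
    then show ?thesis by auto
  next
    case False
    then have "hless n M lt x m" using hless_total[OF mo xs(1,2)] \<open>x \<notin> F\<close> m(1) False by blast
    then show ?thesis using m by auto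
  qed
qed

lemma LM_eq:
  assumes mo: "monomial_order n M lt" and k: "Poly_Mapping.keys p \<subseteq> SMh n M"
    and m: "m \<in> Poly_Mapping.keys p" "\<forall>m'\<in>Poly_Mapping.keys p. m' \<noteq> m \<longrightarrow> hless n M lt m' m"
  shows "LM n M lt p = m"
  unfolding LM_def
proof (rule the_equality)
  show "m \<in> Poly_Mapping.keys p \<and> (\<forall>m'\<in>Poly_Mapping.keys p. m' \<noteq> m \<longrightarrow> hless n M lt m' m)" using m by blast
next
  fix m2 assume m2: "m2 \<in> Poly_Mapping.keys p \<and> (\<forall>m'\<in>Poly_Mapping.keys p. m' \<noteq> m2 \<longrightarrow> hless n M lt m' m2)"
  show "m2 = m"
  proof (rule ccontr)
    assume "m2 \<noteq> m"
    then have "hless n M lt m2 m" "hless n M lt m m2" using m m2 by auto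
    then show False using hless_asym[OF mo] k m m2 by blast
  qed
qed

lemma LM_props:
  assumes mo: "monomial_order n M lt" and k: "Poly_Mapping.keys p \<subseteq> SMh n M" and p: "p \<noteq> 0"
  shows "LM n M lt p \<in> Poly_Mapping.keys p"
    "\<And>m'. m' \<in> Poly_Mapping.keys p \<Longrightarrow> m' \<noteq> LM n M lt p \<Longrightarrow> hless n M lt m' (LM n M lt p)"
proof -
  obtain m where m: "m \<in> Poly_Mapping.keys p" "\<forall>m'\<in>Poly_Mapping.keys p. m' \<noteq> m \<longrightarrow> hless n M lt m' m"
    using finite_max[OF mo _ _ k] p by auto
  have "LM n M lt p = m" using LM_eq[OF mo k m] .
  then show "LM n M lt p \<in> Poly_Mapping.keys p"
    "\<And>m'. m' \<in> Poly_Mapping.keys p \<Longrightarrow> m' \<noteq> LM n M lt p \<Longrightarrow> hless n M lt m' (LM n M lt p)"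
    using m by auto
qed

lemma LM_le:
  assumes mo: "monomial_order n M lt" and k: "Poly_Mapping.keys p \<subseteq> SMh n M"
    and m: "m \<in> Poly_Mapping.keys p"
  shows "\<not> hless n M lt (LM n M lt p) m"
proof -
  have p: "p \<noteq> 0" using m by auto
  show ?thesis using LM_props[OF mo k p] hless_asym[OF mo] k m hless_irrefl[OF mo] by blast
qed

lemma lookup_xmon_mult:
  fixes g :: "hmon \<Rightarrow>\<^sub>0 'k::field"
  shows "Poly_Mapping.lookup (xmon t * g) k = Poly_Mapping.lookup g (k - t)"
  unfolding xmon_def by (simp add: lookup_single_mult)

lemma keys_xmon_mult:
  fixes g :: "hmon \<Rightarrow>\<^sub>0 'k::field"
  shows "Poly_Mapping.keys (xmon t * g) = (+) t ` Poly_Mapping.keys g"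
proof -
  have "k \<in> Poly_Mapping.keys (xmon t * g) \<longleftrightarrow> k \<in> (+) t ` Poly_Mapping.keys g" for k
  proof -
    have "k \<in> (+) t ` Poly_Mapping.keys g \<longleftrightarrow> k - t \<in> Poly_Mapping.keys g"
      by (auto simp: image_iff algebra_simps) (metis add.commute diff_add_cancel)
    then show ?thesis by (simp add: in_keys_iff lookup_xmon_mult)
  qed
  then show ?thesis by blast
qed

lemma shift_LM:
  fixes g :: "hmon \<Rightarrow>\<^sub>0 'k::field"
  assumes mo: "monomial_order n M lt" and k: "Poly_Mapping.keys g \<subseteq> SMh n M" and g: "g \<noteq> 0"
    and hom: "\<forall>m\<in>Poly_Mapping.keys g. snd m = snd (LM n M lt g)"
    and t: "t \<in> SMh n M" and deg: "sdeg n M t + sdeg n M (LM n M lt g) = sdeg n M (t + LM n M lt g)"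
  shows "LM n M lt (xmon t * g) = t + LM n M lt g"
proof (rule LM_eq[OF mo])
  show ks: "Poly_Mapping.keys (xmon t * g) \<subseteq> SMh n M"
    unfolding keys_xmon_mult
  proof (rule image_subsetI)
    fix b assume "b \<in> Poly_Mapping.keys g"
    then show "t + b \<in> SMh n M" using k by (intro SMh_add[OF t]) auto
  qed
  show "t + LM n M lt g \<in> Poly_Mapping.keys (xmon t * g)"
    using LM_props(1)[OF mo k g] by (simp add: keys_xmon_mult)
  show "\<forall>m'\<in>Poly_Mapping.keys (xmon t * g). m' \<noteq> t + LM n M lt g \<longrightarrow> hless n M lt m' (t + LM n M lt g)"
  proof (intro ballI impI)
    fix m' assume "m' \<in> Poly_Mapping.keys (xmon t * g)" "m' \<noteq> t + LM n M lt g"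
    then obtain b where b: "b \<in> Poly_Mapping.keys g" "m' = t + b" "b \<noteq> LM n M lt g"
      by (auto simp: keys_xmon_mult)
    have "hless n M lt b (LM n M lt g)" using LM_props(2)[OF mo k g b(1,3)] .
    moreover have "LM n M lt g \<in> SMh n M" using LM_props(1)[OF mo k g] k by blast
    moreover have "b \<in> SMh n M" using b(1) k by blast
    moreover have "snd (LM n M lt g) = snd b" using hom b(1) by simp
    ultimately show "hless n M lt m' (t + LM n M lt g)"
      using hless_shift[OF mo _ _ t _ _ deg] b(2) by blast
  qed
qed




section \<open>Finiteness\<close>

lemma finite_lattice_pts:
  assumes "polytope n M"
  shows "finite (lattice_pts n M)"
proof -
  obtain V where V: "finite V" "V \<noteq> {}" "\<forall>v\<in>V. in_Rn n v"
    and MV: "M = {x. \<exists>u. (\<forall>v\<in>V. 0 \<le> u v) \<and> sum u V = 1 \<and> x = (\<lambda>i. \<Sum>v\<in>V. u v * v i)}"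
    using assms unfolding polytope_def by blast
  define B where "B = (\<Sum>v\<in>V. \<Sum>i<n. \<bar>v i\<bar>)"
  define Bi where "Bi = ceiling B"
  have bnd: "\<bar>Poly_Mapping.lookup s i\<bar> \<le> Bi" if s: "s \<in> lattice_pts n M" for s i
  proof (cases "i < n")
    case True
    from s obtain u where u: "\<forall>v\<in>V. 0 \<le> u v" "sum u V = 1"
      and eq: "(\<lambda>i. real_of_int (Poly_Mapping.lookup s i)) = (\<lambda>i. \<Sum>v\<in>V. u v * v i)"
      unfolding lattice_pts_def MV by blast
    have u1: "u v \<le> 1" if "v \<in> V" for v
      using member_le_sum[of v V u] u that V(1) by auto
    have "\<bar>real_of_int (Poly_Mapping.lookup s i)\<bar> = \<bar>\<Sum>v\<in>V. u v * v i\<bar>" using fun_cong[OF eq, of i] by simp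
    also have "\<dots> \<le> (\<Sum>v\<in>V. \<bar>u v * v i\<bar>)" by (rule sum_abs)
    also have "\<dots> \<le> (\<Sum>v\<in>V. \<bar>v i\<bar>)"
    proof (rule sum_mono)
      fix v assume "v \<in> V"
      then show "\<bar>u v * v i\<bar> \<le> \<bar>v i\<bar>" using u u1[of v]
        by (simp add: abs_mult mult_left_le_one_le)
    qed
    also have "\<dots> \<le> B" unfolding B_def
    proof (rule sum_mono)
      fix v assume "v \<in> V"
      show "\<bar>v i\<bar> \<le> (\<Sum>i<n. \<bar>v i\<bar>)" using True by (intro member_le_sum) auto
    qed
    finally have "real_of_int \<bar>Poly_Mapping.lookup s i\<bar> \<le> B" by simp
    then show ?thesis unfolding Bi_def by linarith
  next
    case False
    then have "i \<notin> Poly_Mapping.keys s" using s unfolding lattice_pts_def by auto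
    then have "Poly_Mapping.lookup s i = 0" by (simp add: in_keys_iff)
    moreover have "0 \<le> B" unfolding B_def by (intro sum_nonneg) auto
    ultimately show ?thesis unfolding Bi_def by simp
  qed
  define F where "F = (\<lambda>s::zvec. restrict (Poly_Mapping.lookup s) {..<n})"
  have "F ` lattice_pts n M \<subseteq> PiE {..<n} (\<lambda>_. {-Bi..Bi})"
  proof (rule image_subsetI)
    fix s assume s: "s \<in> lattice_pts n M"
    have "-Bi \<le> Poly_Mapping.lookup s i \<and> Poly_Mapping.lookup s i \<le> Bi" for i
      using bnd[OF s, of i] by linarith
    then show "F s \<in> PiE {..<n} (\<lambda>_. {-Bi..Bi})" unfolding F_def by (auto simp: PiE_iff)
  qed
  then have fin: "finite (F ` lattice_pts n M)"
    by (rule finite_subset) (intro finite_PiE; simp)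
  have "inj_on F (lattice_pts n M)"
  proof (rule inj_onI)
    fix s t assume s: "s \<in> lattice_pts n M" and t: "t \<in> lattice_pts n M" and e: "F s = F t"
    show "s = t"
    proof (rule poly_mapping_eqI)
      fix i show "Poly_Mapping.lookup s i = Poly_Mapping.lookup t i"
      proof (cases "i < n")
        case True then show ?thesis using fun_cong[OF e, of i] unfolding F_def by simp
      next
        case False
        then have "i \<notin> Poly_Mapping.keys s" "i \<notin> Poly_Mapping.keys t" using s t unfolding lattice_pts_def by auto
        then show ?thesis by (simp add: in_keys_iff)
      qed
    qed
  qed
  then show ?thesis using fin finite_imageD by blast
qed

lemma SMh_cases': "m \<in> SMh n M \<Longrightarrow> m = 0 \<or> (\<exists>s t. s \<in> lattice_pts n M \<and> t \<in> SMh n M \<and> m = (s, 1) + t)"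
  by (erule SMh.cases) auto

lemma finite_mons:
  assumes "polytope n M"
  shows "finite (mons n M k)"
proof (induction k)
  case 0
  have "mons n M 0 \<subseteq> {0}"
  proof
    fix m assume m: "m \<in> mons n M 0"
    then have "m \<in> SMh n M" "snd m = 0" unfolding mons_def by auto
    then show "m \<in> {0}" using SMh_cases'[of m n M] SMh_snd by fastforce
  qed
  then show ?case using finite_subset by blast
next
  case (Suc k)
  have "mons n M (Suc k) \<subseteq> (\<lambda>(s, t). (s, 1) + t) ` (lattice_pts n M \<times> mons n M k)"
  proof
    fix m assume m: "m \<in> mons n M (Suc k)"
    then have "m \<in> SMh n M" "snd m = int (Suc k)" unfolding mons_def by auto
    then obtain s t where st: "s \<in> lattice_pts n M" "t \<in> SMh n M" "m = (s, 1) + t"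
      using SMh_cases'[of m n M] by auto
    then have "t \<in> mons n M k" using \<open>snd m = int (Suc k)\<close> unfolding mons_def by auto
    then show "m \<in> (\<lambda>(s, t). (s, 1) + t) ` (lattice_pts n M \<times> mons n M k)" using st by force
  qed
  moreover have "finite (lattice_pts n M \<times> mons n M k)" using finite_lattice_pts[OF assms] Suc by blast
  ultimately show ?case using finite_subset by blast
qed

lemma finite_SMh_le:
  assumes "polytope n M"
  shows "finite {m \<in> SMh n M. snd m \<le> int D}"
proof -
  have "{m \<in> SMh n M. snd m \<le> int D} \<subseteq> (\<Union>k\<le>D. mons n M k)"
  proof
    fix m assume m: "m \<in> {m \<in> SMh n M. snd m \<le> int D}"
    then have "snd m \<ge> 0" using SMh_snd by blast
    then have "m \<in> mons n M (nat (snd m))" "nat (snd m) \<le> D" using m unfolding mons_def by auto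
    then show "m \<in> (\<Union>k\<le>D. mons n M k)" by blast
  qed
  then show ?thesis using finite_mons[OF assms] by (meson finite_UN_I finite_atMost finite_subset)
qed

lemma enum_set: "finite R \<Longrightarrow> distinct (enum_set R) \<and> set (enum_set R) = R"
  unfolding enum_set_def by (rule someI_ex) (metis finite_distinct_list)

lemma sorted_exists:
  assumes mo: "monomial_order n M lt"
  shows "finite X \<Longrightarrow> X \<subseteq> SMh n M \<Longrightarrow> \<exists>xs. set xs = X \<and> sorted_wrt (\<lambda>a b. hless n M lt b a) xs"
proof (induction "card X" arbitrary: X rule: less_induct)
  case less
  show ?case
  proof (cases "X = {}")
    case True then show ?thesis by auto
  next
    case False
    then obtain m where m: "m \<in> X" "\<forall>m'\<in>X. m' \<noteq> m \<longrightarrow> hless n M lt m' m"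
      using finite_max[OF mo less.prems(1) _ less.prems(2)] by blast
    have "card (X - {m}) < card X" using m(1) less.prems(1) by (meson card_Diff1_less)
    then obtain xs where xs: "set xs = X - {m}" "sorted_wrt (\<lambda>a b. hless n M lt b a) xs"
      using less.hyps[of "X - {m}"] less.prems by blast
    then show ?thesis using m by (intro exI[of _ "m # xs"]) auto
  qed
qed

lemma sorted_unique:
  assumes mo: "monomial_order n M lt"
  shows "sorted_wrt (\<lambda>a b. hless n M lt b a) xs \<Longrightarrow> sorted_wrt (\<lambda>a b. hless n M lt b a) ys
    \<Longrightarrow> set xs = set ys \<Longrightarrow> set xs \<subseteq> SMh n M \<Longrightarrow> xs = ys"
proof (induction xs arbitrary: ys)
  case Nil then show ?case by auto
next
  case (Cons x xs)
  then obtain y ys' where ys: "ys = y # ys'" by (cases ys) auto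
  have xy: "x = y"
  proof (rule ccontr)
    assume "x \<noteq> y"
    then have "y \<in> set xs" "x \<in> set ys'" using Cons.prems(3) ys by auto
    then have "hless n M lt y x" "hless n M lt x y" using Cons.prems(1,2) ys by auto
    moreover have "x \<in> SMh n M" "y \<in> SMh n M" using Cons.prems(3,4) ys by auto
    ultimately show False using hless_asym[OF mo] by blast
  qed
  have "x \<notin> set xs"
  proof
    assume "x \<in> set xs"
    then have "hless n M lt x x" using Cons.prems(1) by auto
    moreover have "x \<in> SMh n M" using Cons.prems(4) by auto
    ultimately show False using hless_irrefl[OF mo] by blast
  qed
  moreover have "y \<notin> set ys'"
  proof
    assume "y \<in> set ys'"
    then have "hless n M lt y y" using Cons.prems(2) ys by auto
    moreover have "y \<in> SMh n M" using Cons.prems(3,4) ys by auto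
    ultimately show False using hless_irrefl[OF mo] by blast
  qed
  ultimately have "set xs = set ys'" using Cons.prems(3) ys xy by auto
  then have "xs = ys'" using Cons.IH[of ys'] Cons.prems ys by auto
  then show ?case using xy ys by simp
qed

lemma sorted_distinct:
  assumes mo: "monomial_order n M lt"
  shows "sorted_wrt (\<lambda>a b. hless n M lt b a) xs \<Longrightarrow> set xs \<subseteq> SMh n M \<Longrightarrow> distinct xs"
  by (induction xs) (auto dest: hless_irrefl[OF mo])

lemma col_list:
  assumes mo: "monomial_order n M lt" and P: "polytope n M"
  shows "set (col_list n M lt D) = mons n M D" "distinct (col_list n M lt D)"
proof -
  have sub: "mons n M D \<subseteq> SMh n M" unfolding mons_def by auto
  obtain xs where xs: "set xs = mons n M D" "sorted_wrt (\<lambda>a b. hless n M lt b a) xs"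
    using sorted_exists[OF mo finite_mons[OF P] sub] by blast
  have "col_list n M lt D = xs" unfolding col_list_def
  proof (rule the_equality)
    show "set xs = mons n M D \<and> sorted_wrt (\<lambda>a b. hless n M lt b a) xs" using xs by blast
    fix ys assume "set ys = mons n M D \<and> sorted_wrt (\<lambda>a b. hless n M lt b a) ys"
    then show "ys = xs" using sorted_unique[OF mo, of ys xs] xs sub by auto
  qed
  then show "set (col_list n M lt D) = mons n M D" "distinct (col_list n M lt D)"
    using xs sorted_distinct[OF mo xs(2)] sub by auto
qed




section \<open>Row spaces and reduced row echelon forms\<close>

definition RS :: "'a::field mat \<Rightarrow> 'a vec set" where
  "RS A = {transpose_mat A *\<^sub>v y | y. y \<in> carrier_vec (dim_row A)}"

definition lead_pos :: "nat \<Rightarrow> 'a::field vec set \<Rightarrow> nat set" where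
  "lead_pos nc W = {p. p < nc \<and> (\<exists>w\<in>W. w $ p \<noteq> 0 \<and> (\<forall>j<p. w $ j = 0))}"

definition charset :: "nat \<Rightarrow> 'a::field vec set \<Rightarrow> 'a vec set" where
  "charset nc W = {v \<in> W. \<exists>p\<in>lead_pos nc W. v $ p = 1 \<and> (\<forall>j<p. v $ j = 0) \<and>
      (\<forall>q\<in>lead_pos nc W. q \<noteq> p \<longrightarrow> v $ q = 0)}"

lemma tmv_index:
  fixes C :: "'a::field mat"
  assumes C: "C \<in> carrier_mat nr nc" and y: "y \<in> carrier_vec nr" and j: "j < nc"
  shows "(transpose_mat C *\<^sub>v y) $ j = (\<Sum>k\<in>{0..<nr}. C $$ (k, j) * y $ k)"
proof -
  have "(transpose_mat C *\<^sub>v y) $ j = col C j \<bullet> y" using C j by simp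
  also have "\<dots> = (\<Sum>k\<in>{0..<nr}. C $$ (k, j) * y $ k)"
    unfolding scalar_prod_def using C y j by (intro sum.cong) auto
  finally show ?thesis .
qed

lemma tmv_carrier: "(C::'a::field mat) \<in> carrier_mat nr nc \<Longrightarrow> transpose_mat C *\<^sub>v y \<in> carrier_vec nc"
  unfolding carrier_vec_def by simp

lemma row_as_tmv:
  fixes C :: "'a::field mat"
  assumes C: "C \<in> carrier_mat nr nc" and i: "i < nr"
  shows "row C i = transpose_mat C *\<^sub>v unit_vec nr i"
proof (rule eq_vecI)
  show "dim_vec (row C i) = dim_vec (transpose_mat C *\<^sub>v unit_vec nr i)" using C by simp
  fix j assume "j < dim_vec (transpose_mat C *\<^sub>v unit_vec nr i)"
  then have j: "j < nc" using C by simp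
  have "(transpose_mat C *\<^sub>v unit_vec nr i) $ j = (\<Sum>k\<in>{0..<nr}. C $$ (k, j) * unit_vec nr i $ k)"
    using tmv_index[OF C _ j] by simp
  also have "\<dots> = (\<Sum>k\<in>{0..<nr}. if k = i then C $$ (i, j) else 0)"
    by (intro sum.cong) (auto simp: unit_vec_def)
  also have "\<dots> = C $$ (i, j)" using i by simp
  finally show "row C i $ j = (transpose_mat C *\<^sub>v unit_vec nr i) $ j" using C i j by simp
qed

lemma RS_sub: "(C::'a::field mat) \<in> carrier_mat nr nc \<Longrightarrow> RS C \<subseteq> carrier_vec nc"
  unfolding RS_def by auto

lemma pivot_mono:
  fixes C :: "'a::field mat"
  assumes C: "C \<in> carrier_mat nr nc" and p: "pivot_fun C f nc"
  shows "i' < nr \<Longrightarrow> f i' < nc \<Longrightarrow> i < i' \<Longrightarrow> f i < f i'"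
proof (induction i' arbitrary: i)
  case 0 then show ?case by simp
next
  case (Suc k)
  have d: "dim_row C = nr" using C by simp
  have "f (Suc k) > f k \<or> f (Suc k) = nc" using pivot_funD(3)[OF d p, of k] Suc.prems by simp
  then have fk: "f k < f (Suc k)" using Suc.prems by auto
  show ?case
  proof (cases "i = k")
    case True then show ?thesis using fk by simp
  next
    case False
    then have "i < k" using Suc.prems by simp
    then have "f i < f k" using Suc.IH[of i] Suc.prems fk by simp
    then show ?thesis using fk by simp
  qed
qed

lemma rref_char:
  fixes C :: "'a::field mat"
  assumes C: "C \<in> carrier_mat nr nc" and p: "pivot_fun C f nc"
  shows "charset nc (RS C) = {row C i | i. i < nr \<and> row C i \<noteq> 0\<^sub>v nc}"
proof -
  have d: "dim_row C = nr" using C by simp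
  define K where "K = {i. i < nr \<and> f i < nc}"
  have finK: "finite K" unfolding K_def by auto
  have fle: "\<And>i. i < nr \<Longrightarrow> f i \<le> nc" using pivot_funD(1)[OF d p] by blast
  have zero_row: "C $$ (i, j) = 0" if "i < nr" "i \<notin> K" "j < nc" for i j
  proof -
    have "f i = nc" using fle[OF that(1)] that unfolding K_def by auto
    then show ?thesis using pivot_funD(2)[OF d p that(1)] that(3) by simp
  qed
  have piv1: "\<And>i. i \<in> K \<Longrightarrow> C $$ (i, f i) = 1" using pivot_funD(4)[OF d p] unfolding K_def by blast
  have piv0: "\<And>i i'. i \<in> K \<Longrightarrow> i' < nr \<Longrightarrow> i' \<noteq> i \<Longrightarrow> C $$ (i', f i) = 0"
    using pivot_funD(5)[OF d p] unfolding K_def by blast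
  have before: "\<And>i j. i < nr \<Longrightarrow> j < f i \<Longrightarrow> C $$ (i, j) = 0" using pivot_funD(2)[OF d p] by blast
  have mono: "\<And>i i'. i \<in> K \<Longrightarrow> i' \<in> K \<Longrightarrow> i < i' \<Longrightarrow> f i < f i'"
    using pivot_mono[OF C p] unfolding K_def by blast
  have finj: "i = i'" if "i \<in> K" "i' \<in> K" "f i = f i'" for i i'
  proof (rule ccontr)
    assume "i \<noteq> i'"
    then have "i < i' \<or> i' < i" by auto
    then show False using mono[OF that(1,2)] mono[OF that(2,1)] that(3) by auto
  qed
  have gK: "(transpose_mat C *\<^sub>v y) $ j = (\<Sum>k\<in>K. C $$ (k, j) * y $ k)"
    if y: "y \<in> carrier_vec nr" and j: "j < nc" for y j
  proof -
    have "(transpose_mat C *\<^sub>v y) $ j = (\<Sum>k\<in>{0..<nr}. C $$ (k, j) * y $ k)" using tmv_index[OF C y j] .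
    also have "\<dots> = (\<Sum>k\<in>K. C $$ (k, j) * y $ k)"
      by (rule sum.mono_neutral_right) (auto simp: K_def zero_row j)
    finally show ?thesis .
  qed
  have hK: "(transpose_mat C *\<^sub>v y) $ (f i) = y $ i"
    if y: "y \<in> carrier_vec nr" and i: "i \<in> K" for y i
  proof -
    have fi: "f i < nc" using i unfolding K_def by auto
    have "(transpose_mat C *\<^sub>v y) $ (f i) = (\<Sum>k\<in>{0..<nr}. C $$ (k, f i) * y $ k)" using tmv_index[OF C y fi] .
    also have "\<dots> = (\<Sum>k\<in>{0..<nr}. if k = i then y $ i else 0)"
      by (intro sum.cong) (auto simp: piv1[OF i] piv0[OF i])
    also have "\<dots> = y $ i" using i unfolding K_def by simp
    finally show ?thesis .
  qed
  have iK: "w $ j = (\<Sum>k\<in>K. C $$ (k, j) * w $ (f k))" if w: "w \<in> RS C" and j: "j < nc" for w j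
  proof -
    obtain y where y: "y \<in> carrier_vec nr" "w = transpose_mat C *\<^sub>v y" using w d unfolding RS_def by auto
    show ?thesis using gK[OF y(1) j] hK[OF y(1)] y(2) by simp
  qed
  have rowRS: "row C i \<in> RS C" if "i < nr" for i
    unfolding RS_def using row_as_tmv[OF C that] d by auto
  have row_idx: "row C i $ j = C $$ (i, j)" if "i < nr" "j < nc" for i j using C that by simp
  have LP: "lead_pos nc (RS C) = f ` K"
  proof
    show "f ` K \<subseteq> lead_pos nc (RS C)"
    proof
      fix p assume "p \<in> f ` K"
      then obtain i where i: "i \<in> K" "p = f i" by auto
      have inr: "i < nr" "f i < nc" using i unfolding K_def by auto
      show "p \<in> lead_pos nc (RS C)" unfolding lead_pos_def
        using inr i rowRS[OF inr(1)] row_idx[OF inr(1)] piv1[OF i(1)] before[OF inr(1)]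
        by (intro CollectI conjI bexI[of _ "row C i"]) auto
    qed
  next
    show "lead_pos nc (RS C) \<subseteq> f ` K"
    proof
      fix p assume "p \<in> lead_pos nc (RS C)"
      then obtain w where p: "p < nc" "w \<in> RS C" "w $ p \<noteq> 0" "\<forall>j<p. w $ j = 0"
        unfolding lead_pos_def by auto
      obtain y where y: "y \<in> carrier_vec nr" "w = transpose_mat C *\<^sub>v y" using p(2) d unfolding RS_def by auto
      define S where "S = {k \<in> K. y $ k \<noteq> 0}"
      have S: "S \<noteq> {}"
      proof
        assume "S = {}"
        then have "\<forall>k\<in>K. y $ k = 0" unfolding S_def by auto
        then have "w $ p = 0" using gK[OF y(1) p(1)] y(2) by simp
        then show False using p by simp
      qed
      have finS: "finite S" using finK unfolding S_def by auto
      define i0 where "i0 = Min S"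
      have i0: "i0 \<in> S" "\<And>k. k \<in> S \<Longrightarrow> i0 \<le> k" using S finS unfolding i0_def by auto
      have i0K: "i0 \<in> K" using i0 unfolding S_def by auto
      have fi0: "f i0 < nc" using i0K unfolding K_def by auto
      have wi0: "w $ (f i0) \<noteq> 0" using hK[OF y(1) i0K] y(2) i0 unfolding S_def by auto
      have wz: "w $ j = 0" if j: "j < f i0" for j
      proof -
        have jn: "j < nc" using j fi0 by simp
        have "(\<Sum>k\<in>K. C $$ (k, j) * y $ k) = 0"
        proof (rule sum.neutral, intro ballI)
          fix k assume k: "k \<in> K"
          show "C $$ (k, j) * y $ k = 0"
          proof (cases "y $ k = 0")
            case False
            then have "k \<in> S" using k unfolding S_def by auto
            then have "i0 \<le> k" using i0 by auto
            then have "j < f k"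
              using j mono[OF i0K k] by (cases "i0 = k") auto
            then have "C $$ (k, j) = 0" using before k unfolding K_def by auto
            then show ?thesis by simp
          qed simp
        qed
        then show ?thesis using gK[OF y(1) jn] y(2) by simp
      qed
      have "p = f i0"
      proof (rule ccontr)
        assume "p \<noteq> f i0"
        then have "p < f i0 \<or> f i0 < p" by auto
        then show False using wz p(3) p(4) wi0 by auto
      qed
      then show "p \<in> f ` K" using i0K by auto
    qed
  qed
  show ?thesis
  proof
    show "charset nc (RS C) \<subseteq> {row C i | i. i < nr \<and> row C i \<noteq> 0\<^sub>v nc}"
    proof
      fix v assume "v \<in> charset nc (RS C)"
      then obtain p where v: "v \<in> RS C" "p \<in> f ` K" "v $ p = 1"
        "\<forall>q\<in>f ` K. q \<noteq> p \<longrightarrow> v $ q = 0"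
        unfolding charset_def LP by blast
      then obtain i where i: "i \<in> K" "p = f i" by auto
      have inr: "i < nr" "f i < nc" using i unfolding K_def by auto
      have vk: "v $ (f k) = (if k = i then 1 else 0)" if k: "k \<in> K" for k
      proof (cases "k = i")
        case True then show ?thesis using v(3) i(2) by simp
      next
        case False
        then have "f k \<noteq> p" using finj[OF k i(1)] i(2) by auto
        then show ?thesis using v(4) k False by auto
      qed
      have vc: "v \<in> carrier_vec nc" using v(1) RS_sub[OF C] by auto
      have "v = row C i"
      proof (rule eq_vecI)
        show "dim_vec v = dim_vec (row C i)" using vc C by simp
        fix j assume "j < dim_vec (row C i)"
        then have j: "j < nc" using C by simp
        have "v $ j = (\<Sum>k\<in>K. C $$ (k, j) * v $ (f k))" using iK[OF v(1) j] .
        also have "\<dots> = (\<Sum>k\<in>K. if k = i then C $$ (i, j) else 0)"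
          by (intro sum.cong) (auto simp: vk)
        also have "\<dots> = C $$ (i, j)" using finK i(1) by simp
        finally show "v $ j = row C i $ j" using row_idx[OF inr(1) j] by simp
      qed
      moreover have "row C i \<noteq> 0\<^sub>v nc"
      proof
        assume "row C i = 0\<^sub>v nc"
        then have "row C i $ (f i) = 0" using inr by simp
        then show False using row_idx[OF inr] piv1[OF i(1)] by simp
      qed
      ultimately show "v \<in> {row C i | i. i < nr \<and> row C i \<noteq> 0\<^sub>v nc}" using inr by blast
    qed
  next
    show "{row C i | i. i < nr \<and> row C i \<noteq> 0\<^sub>v nc} \<subseteq> charset nc (RS C)"
    proof
      fix v assume "v \<in> {row C i | i. i < nr \<and> row C i \<noteq> 0\<^sub>v nc}"
      then obtain i where i: "i < nr" "row C i \<noteq> 0\<^sub>v nc" "v = row C i" by blast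
      have iK': "i \<in> K"
      proof (rule ccontr)
        assume "i \<notin> K"
        then have "row C i = 0\<^sub>v nc" using zero_row[OF i(1)] C row_idx[OF i(1)] by (intro eq_vecI) auto
        then show False using i by simp
      qed
      have fi: "f i < nc" using iK' unfolding K_def by auto
      have "v $ f i = 1" using i row_idx[OF i(1) fi] piv1[OF iK'] by simp
      moreover have "\<forall>j<f i. v $ j = 0" using i row_idx[OF i(1)] before[OF i(1)] fi by auto
      moreover have "\<forall>q\<in>f ` K. q \<noteq> f i \<longrightarrow> v $ q = 0"
      proof (intro ballI impI)
        fix q assume "q \<in> f ` K" "q \<noteq> f i"
        then obtain k where k: "k \<in> K" "q = f k" "k \<noteq> i" by auto
        have "f k < nc" using k unfolding K_def by auto
        then show "v $ q = 0" using i(3) row_idx[OF i(1)] piv0[OF k(1) i(1)] k by simp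
      qed
      moreover have "f i \<in> f ` K" using iK' by blast
      moreover have "v \<in> RS C" using rowRS[OF i(1)] i(3) by simp
      ultimately show "v \<in> charset nc (RS C)" unfolding charset_def LP by blast
    qed
  qed
qed

lemma RS_mult:
  fixes A :: "'a::field mat"
  assumes A: "A \<in> carrier_mat nr nc" and P: "P \<in> carrier_mat nr nr"
  shows "RS (P * A) \<subseteq> RS A"
proof
  fix w assume "w \<in> RS (P * A)"
  then obtain y where y: "y \<in> carrier_vec nr" "w = transpose_mat (P * A) *\<^sub>v y" using A P unfolding RS_def by auto
  have "w = (transpose_mat A * transpose_mat P) *\<^sub>v y" using y transpose_mult[OF P A] by simp
  also have "\<dots> = transpose_mat A *\<^sub>v (transpose_mat P *\<^sub>v y)"
    using A P y by (intro assoc_mult_mat_vec) auto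
  finally show "w \<in> RS A" unfolding RS_def using A P y(1) by (auto intro!: exI[of _ "transpose_mat P *\<^sub>v y"])
qed

lemma rref_props:
  fixes A :: "'a::field mat"
  assumes A: "A \<in> carrier_mat nr nc"
  shows "rref A \<in> carrier_mat nr nc" "row_echelon_form (rref A)" "RS (rref A) = RS A"
proof -
  obtain P Q where PQ: "rref A = P * A" "P \<in> carrier_mat nr nr" "Q \<in> carrier_mat nr nr" "P * Q = 1\<^sub>m nr" "Q * P = 1\<^sub>m nr"
    using gauss_jordan_single(4)[OF A refl] unfolding rref_def by blast
  show C: "rref A \<in> carrier_mat nr nc" "row_echelon_form (rref A)"
    using gauss_jordan_single(2,3)[OF A refl] unfolding rref_def by auto
  have "Q * rref A = A" using PQ A by (simp add: assoc_mult_mat[symmetric, of Q nr nr P nr A nc])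
  then have "RS A \<subseteq> RS (rref A)" using RS_mult[OF C(1) PQ(3)] by simp
  moreover have "RS (rref A) \<subseteq> RS A" using RS_mult[OF A PQ(2)] PQ(1) by simp
  ultimately show "RS (rref A) = RS A" by blast
qed




definition Phi :: "hmon list \<Rightarrow> 'k::field vec \<Rightarrow> (hmon \<Rightarrow>\<^sub>0 'k)" where
  "Phi cs v = (\<Sum>j<length cs. Poly_Mapping.single (cs ! j) (v $ j))"

lemma lookup_Phi_nth:
  assumes cs: "distinct cs" and j: "j < length cs"
  shows "Poly_Mapping.lookup (Phi cs v) (cs ! j) = v $ j"
proof -
  have "Poly_Mapping.lookup (Phi cs v) (cs ! j) = (\<Sum>j'<length cs. if j' = j then v $ j else 0)"
    unfolding Phi_def lookup_sum
    by (intro sum.cong refl) (auto simp: lookup_single nth_eq_iff_index_eq[OF cs] j when_def)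
  also have "\<dots> = v $ j" using j by simp
  finally show ?thesis .
qed

lemma lookup_Phi_notin:
  assumes "m \<notin> set cs"
  shows "Poly_Mapping.lookup (Phi cs v) m = 0"
  unfolding Phi_def lookup_sum using assms
  by (intro sum.neutral) (auto simp: lookup_single when_def)

lemma Phi_inj:
  assumes cs: "distinct cs" and v: "v \<in> carrier_vec (length cs)" and w: "w \<in> carrier_vec (length cs)"
    and e: "Phi cs v = Phi cs w"
  shows "v = w"
proof (rule eq_vecI)
  show "dim_vec v = dim_vec w" using v w by simp
  fix j assume "j < dim_vec w"
  then have j: "j < length cs" using w by simp
  show "v $ j = w $ j" using lookup_Phi_nth[OF cs j, of v] lookup_Phi_nth[OF cs j, of w] e by simp
qed

lemma Phi_zero: "Phi cs (0\<^sub>v (length cs)) = 0"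
  unfolding Phi_def by (intro sum.neutral) auto

lemma Phi_eq_zero:
  assumes cs: "distinct cs" and v: "v \<in> carrier_vec (length cs)"
  shows "Phi cs v = 0 \<longleftrightarrow> v = 0\<^sub>v (length cs)"
  using Phi_inj[OF cs v, of "0\<^sub>v (length cs)"] Phi_zero[of cs] by auto

lemma Rows_eq:
  fixes C :: "'k::field mat"
  assumes cs: "distinct cs" and C: "C \<in> carrier_mat nr (length cs)"
  shows "Rows cs C = Phi cs ` {row C i | i. i < nr \<and> row C i \<noteq> 0\<^sub>v (length cs)}"
proof -
  have rowp: "(\<Sum>j<dim_col C. Poly_Mapping.single (cs ! j) (C $$ (i, j))) = Phi cs (row C i)" if "i < nr" for i
    unfolding Phi_def using C that by (intro sum.cong) auto
  have dc: "dim_col C = length cs" using C by blast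
  have rc: "row C i \<in> carrier_vec (length cs)" for i unfolding carrier_vec_def using dc by simp
  show ?thesis
  proof
    show "Rows cs C \<subseteq> Phi cs ` {row C i | i. i < nr \<and> row C i \<noteq> 0\<^sub>v (length cs)}"
    proof
      fix p assume "p \<in> Rows cs C"
      then have "p \<noteq> 0" "\<exists>i<dim_row C. p = (\<Sum>j<dim_col C. Poly_Mapping.single (cs ! j) (C $$ (i, j)))"
        unfolding Rows_def by blast+
      then obtain i where i: "i < nr" "p \<noteq> 0" "p = (\<Sum>j<dim_col C. Poly_Mapping.single (cs ! j) (C $$ (i, j)))"
        using C by auto
      then have "p = Phi cs (row C i)" using rowp by simp
      moreover have "row C i \<noteq> 0\<^sub>v (length cs)" using i(2) \<open>p = Phi cs (row C i)\<close> Phi_zero[of cs] by auto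
      ultimately show "p \<in> Phi cs ` {row C i | i. i < nr \<and> row C i \<noteq> 0\<^sub>v (length cs)}" using i(1) by blast
    qed
  next
    show "Phi cs ` {row C i | i. i < nr \<and> row C i \<noteq> 0\<^sub>v (length cs)} \<subseteq> Rows cs C"
    proof
      fix p assume "p \<in> Phi cs ` {row C i | i. i < nr \<and> row C i \<noteq> 0\<^sub>v (length cs)}"
      then obtain i where i: "i < nr" "row C i \<noteq> 0\<^sub>v (length cs)" "p = Phi cs (row C i)" by blast
      have "p \<noteq> 0" using i Phi_eq_zero[OF cs rc] by simp
      moreover have "p = (\<Sum>j<dim_col C. Poly_Mapping.single (cs ! j) (C $$ (i, j)))" using i rowp by simp
      moreover have "i < dim_row C" using i C by simp
      ultimately show "p \<in> Rows cs C" unfolding Rows_def by blast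
    qed
  qed
qed

lemma Rows_rref_eq:
  fixes A B :: "'k::field mat"
  assumes cs: "distinct cs" and A: "A \<in> carrier_mat nrA (length cs)" and B: "B \<in> carrier_mat nrB (length cs)"
    and RS: "RS A = RS B"
  shows "Rows cs (rref A) = Rows cs (rref B)"
proof -
  have gen: "Rows cs (rref X) = Phi cs ` charset (length cs) (RS X)" if X: "X \<in> carrier_mat nr (length cs)"
    for X :: "'k mat" and nr
  proof -
    obtain f where f: "pivot_fun (rref X) f (length cs)"
      using rref_props(2)[OF X] rref_props(1)[OF X] unfolding row_echelon_form_def by auto
    have "Rows cs (rref X) = Phi cs ` {row (rref X) i | i. i < nr \<and> row (rref X) i \<noteq> 0\<^sub>v (length cs)}"
      using Rows_eq[OF cs rref_props(1)[OF X]] .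
    also have "\<dots> = Phi cs ` charset (length cs) (RS (rref X))"
      using rref_char[OF rref_props(1)[OF X] f] by simp
    finally show ?thesis using rref_props(3)[OF X] by simp
  qed
  show ?thesis using gen[OF A] gen[OF B] RS by simp
qed

section \<open>Full rank\<close>

lemma mat_vec_zero:
  fixes A :: "'k::field mat"
  assumes "A \<in> carrier_mat nr n"
  shows "A *\<^sub>v 0\<^sub>v n = 0\<^sub>v nr"
proof (rule eq_vecI)
  show "dim_vec (A *\<^sub>v 0\<^sub>v n) = dim_vec (0\<^sub>v nr)" using assms by simp
  fix i assume "i < dim_vec (0\<^sub>v nr)"
  then have i: "i < nr" by simp
  have "row A i \<in> carrier_vec n" using assms i by simp
  then show "(A *\<^sub>v 0\<^sub>v n) $ i = 0\<^sub>v nr $ i" using assms i by simp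
qed

lemma full_rank_indep:
  fixes A :: "'k::field mat"
  assumes A: "A \<in> carrier_mat nr nc"
    and ind: "\<And>y. y \<in> carrier_vec nr \<Longrightarrow> transpose_mat A *\<^sub>v y = 0\<^sub>v nc \<Longrightarrow> y = 0\<^sub>v nr"
  shows "full_rank A"
proof -
  obtain P Q where PQ: "gauss_jordan_single A = P * A" "P \<in> carrier_mat nr nr" "Q \<in> carrier_mat nr nr"
    "P * Q = 1\<^sub>m nr" "Q * P = 1\<^sub>m nr"
    using gauss_jordan_single(4)[OF A refl] by blast
  define C where "C = gauss_jordan_single A"
  have C: "C \<in> carrier_mat nr nc" "row_echelon_form C" using gauss_jordan_single(2,3)[OF A refl] C_def by auto
  obtain f where f: "pivot_fun C f nc" using C unfolding row_echelon_form_def by auto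
  have d: "dim_row C = nr" using C by simp
  have CPA: "C = P * A" using PQ C_def by simp
  have QC: "Q * C = A" using PQ A CPA by (simp add: assoc_mult_mat[symmetric, of Q nr nr P nr A nc])
  have QPinv: "transpose_mat Q *\<^sub>v (transpose_mat P *\<^sub>v y) = y" if "y \<in> carrier_vec nr" for y
  proof -
    have "transpose_mat Q *\<^sub>v (transpose_mat P *\<^sub>v y) = (transpose_mat Q * transpose_mat P) *\<^sub>v y"
      using PQ that by (intro assoc_mult_mat_vec[symmetric]) auto
    also have "\<dots> = transpose_mat (P * Q) *\<^sub>v y" using transpose_mult[OF PQ(2,3)] by simp
    also have "\<dots> = y" using PQ(4) that by simp
    finally show ?thesis .
  qed
  have allpiv: "f i < nc" if i: "i < nr" for i
  proof (rule ccontr)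
    assume "\<not> f i < nc"
    then have fi: "f i = nc" using pivot_funD(1)[OF d f i] by simp
    have "row C i = 0\<^sub>v nc" using pivot_funD(2)[OF d f i] fi C i by (intro eq_vecI) auto
    moreover have "row C i = transpose_mat A *\<^sub>v (transpose_mat P *\<^sub>v unit_vec nr i)"
    proof -
      have "row C i = transpose_mat C *\<^sub>v unit_vec nr i" using row_as_tmv[OF C(1) i] .
      also have "\<dots> = (transpose_mat A * transpose_mat P) *\<^sub>v unit_vec nr i"
        using transpose_mult[OF PQ(2) A] CPA by simp
      also have "\<dots> = transpose_mat A *\<^sub>v (transpose_mat P *\<^sub>v unit_vec nr i)"
        using A PQ by (intro assoc_mult_mat_vec) auto
      finally show ?thesis .
    qed
    ultimately have "transpose_mat P *\<^sub>v unit_vec nr i = 0\<^sub>v nr" using ind PQ(2) by auto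
    then have "unit_vec nr i = transpose_mat Q *\<^sub>v 0\<^sub>v nr" using QPinv[of "unit_vec nr i"] by simp
    also have "\<dots> = 0\<^sub>v nr" using PQ(3) by (intro mat_vec_zero) simp
    finally have u: "unit_vec nr i = (0\<^sub>v nr :: 'k vec)" .
    have a: "unit_vec nr i $ i = (1::'k)" "0\<^sub>v nr $ i = (0::'k)" using i by auto
    have "(1::'k) = 0" using a u by metis
    then show False by simp
  qed
  have nrnc: "nr \<le> nc"
  proof -
    have "inj_on f {..<nr}"
    proof (rule inj_onI)
      fix i j assume "i \<in> {..<nr}" "j \<in> {..<nr}" "f i = f j"
      then show "i = j" using pivot_mono[OF C(1) f, of i j] pivot_mono[OF C(1) f, of j i] allpiv
        by (metis lessThan_iff less_irrefl nat_neq_iff)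
    qed
    moreover have "f ` {..<nr} \<subseteq> {..<nc}" using allpiv by auto
    ultimately show ?thesis using card_inj_on_le[of f "{..<nr}" "{..<nc}"] by simp
  qed
  interpret vs: vec_space "TYPE('k)" nr .
  have colsA: "set (cols A) \<subseteq> carrier_vec nr" using A by (auto simp: cols_def)
  have le: "vs.rank A \<le> nr"
  proof -
    have "vectorspace.dim class_ring (vs.span_vs (set (cols A))) \<le> vs.dim"
      using vs.subspace_dim[OF vs.span_is_subspace[OF colsA] vs.fin_dim vs.fin_dim_span_cols[OF A]] by simp
    then show ?thesis unfolding vs.rank_def vs.dim_is_n .
  qed
  have colQ: "col Q i = Q *\<^sub>v unit_vec nr i" if "i < nr" for i
  proof -
    have "col Q i = col (Q * 1\<^sub>m nr) i" using PQ(3) by simp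
    also have "\<dots> = Q *\<^sub>v col (1\<^sub>m nr) i" using PQ(3) that by (intro col_mult2) auto
    also have "\<dots> = Q *\<^sub>v unit_vec nr i" using that by simp
    finally show ?thesis .
  qed
  have colC: "col C (f i) = unit_vec nr i" if i: "i < nr" for i
  proof (rule eq_vecI)
    show "dim_vec (col C (f i)) = dim_vec (unit_vec nr i)" using C by simp
    fix k assume "k < dim_vec (unit_vec nr i)"
    then have k: "k < nr" by simp
    show "col C (f i) $ k = unit_vec nr i $ k"
      using pivot_funD(4)[OF d f i] pivot_funD(5)[OF d f i _ k] allpiv[OF i] C k i
      by (cases "k = i") (auto simp: unit_vec_def)
  qed
  have colA: "col A (f i) = col Q i" if i: "i < nr" for i
  proof -
    have "col A (f i) = col (Q * C) (f i)" using QC by simp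
    also have "\<dots> = Q *\<^sub>v col C (f i)" using PQ(3) C(1) allpiv[OF i] by (intro col_mult2) auto
    finally show ?thesis using colC[OF i] colQ[OF i] by simp
  qed
  have QQ: "P *\<^sub>v (Q *\<^sub>v v) = v" if "v \<in> carrier_vec nr" for v
  proof -
    have "P *\<^sub>v (Q *\<^sub>v v) = (P * Q) *\<^sub>v v" using PQ that by (intro assoc_mult_mat_vec[symmetric]) auto
    then show ?thesis using PQ(4) that by simp
  qed
  have distQ: "distinct (cols Q)"
  proof -
    have "col Q i \<noteq> col Q j" if "i < nr" "j < nr" "i \<noteq> j" for i j
    proof
      assume e: "col Q i = col Q j"
      have "unit_vec nr i = P *\<^sub>v (Q *\<^sub>v unit_vec nr i)" using QQ by simp
      also have "\<dots> = P *\<^sub>v (Q *\<^sub>v unit_vec nr j)" using e colQ that by simp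
      also have "\<dots> = unit_vec nr j" using QQ by simp
      finally have u: "unit_vec nr i = (unit_vec nr j :: 'k vec)" .
      have a: "unit_vec nr i $ i = (1::'k)" "unit_vec nr j $ i = (0::'k)" using that by auto
      have "(1::'k) = 0" using a u by metis
      then show False by simp
    qed
    then show ?thesis unfolding cols_def distinct_map using PQ(3) by (auto simp: inj_on_def) blast
  qed
  have indQ: "vs.lin_indpt (set (cols Q))"
  proof
    assume "vs.lin_dep (set (cols Q))"
    then obtain v where v: "v \<in> carrier_vec nr" "v \<noteq> 0\<^sub>v nr" "Q *\<^sub>v v = 0\<^sub>v nr"
      using vs.lin_depE[OF PQ(3) _ distQ] by blast
    have "v = P *\<^sub>v 0\<^sub>v nr" using QQ[OF v(1)] v(3) by simp
    also have "\<dots> = 0\<^sub>v nr" using PQ(2) by (intro mat_vec_zero) simp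
    finally show False using v(2) by simp
  qed
  have subQ: "set (cols Q) \<subseteq> set (cols A)"
  proof
    fix c assume "c \<in> set (cols Q)"
    then obtain i where i: "i < nr" "c = col Q i" using PQ(3) by (auto simp: cols_def)
    then have "c = col A (f i)" using colA by simp
    then show "c \<in> set (cols A)" using allpiv[OF i(1)] A by (auto simp: cols_def)
  qed
  have "card (set (cols Q)) = nr" using distinct_card[OF distQ] PQ(3) by simp
  then have ge: "nr \<le> vs.rank A" using vs.rank_ge_card_indpt[OF A subQ indQ] by simp
  show ?thesis unfolding full_rank_def using le ge nrnc A by simp
qed




definition smul :: "'k::field \<Rightarrow> (hmon \<Rightarrow>\<^sub>0 'k) \<Rightarrow> (hmon \<Rightarrow>\<^sub>0 'k)" where
  "smul c p = Poly_Mapping.single 0 c * p"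

lemma lookup_smul: "Poly_Mapping.lookup (smul c p) m = c * Poly_Mapping.lookup p m"
  unfolding smul_def by (simp add: lookup_single_mult)

lemma smul_add_left: "smul (a + b) p = smul a p + smul b p"
  by (rule poly_mapping_eqI) (simp add: lookup_smul lookup_add algebra_simps)
lemma smul_add_right: "smul a (p + q) = smul a p + smul a q"
  by (rule poly_mapping_eqI) (simp add: lookup_smul lookup_add algebra_simps)
lemma smul_smul: "smul a (smul b p) = smul (a * b) p"
  by (rule poly_mapping_eqI) (simp add: lookup_smul)
lemma smul_zero_left[simp]: "smul 0 p = 0"
  by (rule poly_mapping_eqI) (simp add: lookup_smul)
lemma smul_zero_right[simp]: "smul a 0 = 0"
  by (rule poly_mapping_eqI) (simp add: lookup_smul)
lemma smul_one[simp]: "smul 1 p = p"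
  by (rule poly_mapping_eqI) (simp add: lookup_smul)
lemma smul_neg: "smul (-1) p = - p"
  by (rule poly_mapping_eqI) (simp add: lookup_smul)
lemma smul_sum: "smul a (sum F S) = (\<Sum>x\<in>S. smul a (F x))"
  unfolding smul_def by (simp add: sum_distrib_left)
lemma smul_mult: "smul a p * q = smul a (p * q)"
  unfolding smul_def by (simp add: mult.assoc)
lemma smul_xmon: "smul c (xmon s) = Poly_Mapping.single s c"
  unfolding smul_def xmon_def by (simp add: mult_single)
lemma keys_smul: "Poly_Mapping.keys (smul c p) \<subseteq> Poly_Mapping.keys p"
  by (auto simp: in_keys_iff lookup_smul)

lemma poly_expand: "p = (\<Sum>s\<in>Poly_Mapping.keys p. smul (Poly_Mapping.lookup p s) (xmon s))"
proof (rule poly_mapping_eqI)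
  fix m
  have "Poly_Mapping.lookup (\<Sum>s\<in>Poly_Mapping.keys p. smul (Poly_Mapping.lookup p s) (xmon s)) m
      = (\<Sum>s\<in>Poly_Mapping.keys p. if s = m then Poly_Mapping.lookup p m else 0)"
    unfolding lookup_sum smul_xmon by (intro sum.cong) (auto simp: lookup_single when_def)
  also have "\<dots> = Poly_Mapping.lookup p m" by (auto simp: in_keys_iff)
  finally show "Poly_Mapping.lookup p m = Poly_Mapping.lookup (\<Sum>s\<in>Poly_Mapping.keys p. smul (Poly_Mapping.lookup p s) (xmon s)) m" by simp
qed

definition lsp :: "(hmon \<Rightarrow>\<^sub>0 'k::field) list \<Rightarrow> (hmon \<Rightarrow>\<^sub>0 'k) set" where
  "lsp xs = {\<Sum>i<length xs. smul (c i) (xs ! i) | c. True}"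

lemma lsp_zero: "0 \<in> lsp xs"
  unfolding lsp_def by (intro CollectI exI[of _ "\<lambda>_. 0"]) simp

lemma lsp_add: "p \<in> lsp xs \<Longrightarrow> q \<in> lsp xs \<Longrightarrow> p + q \<in> lsp xs"
proof -
  assume "p \<in> lsp xs" "q \<in> lsp xs"
  then obtain c d where "p = (\<Sum>i<length xs. smul (c i) (xs ! i))" "q = (\<Sum>i<length xs. smul (d i) (xs ! i))"
    unfolding lsp_def by blast
  then have "p + q = (\<Sum>i<length xs. smul (c i + d i) (xs ! i))"
    by (simp add: smul_add_left sum.distrib)
  then show ?thesis unfolding lsp_def by (intro CollectI exI[of _ "\<lambda>i. c i + d i"]) simp
qed

lemma lsp_smul: "p \<in> lsp xs \<Longrightarrow> smul a p \<in> lsp xs"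
proof -
  assume "p \<in> lsp xs"
  then obtain c where "p = (\<Sum>i<length xs. smul (c i) (xs ! i))" unfolding lsp_def by blast
  then have "smul a p = (\<Sum>i<length xs. smul (a * c i) (xs ! i))"
    by (simp add: smul_sum smul_smul)
  then show ?thesis unfolding lsp_def by (intro CollectI exI[of _ "\<lambda>i. a * c i"]) simp
qed

lemma lsp_neg: "p \<in> lsp xs \<Longrightarrow> - p \<in> lsp xs"
  using lsp_smul[of p xs "-1"] by (simp add: smul_neg)

lemma lsp_diff: "p \<in> lsp xs \<Longrightarrow> q \<in> lsp xs \<Longrightarrow> p - q \<in> lsp xs"
proof -
  assume "p \<in> lsp xs" "q \<in> lsp xs"
  then have "p + - q \<in> lsp xs" by (intro lsp_add lsp_neg)
  then show ?thesis by (simp only: diff_conv_add_uminus)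
qed

lemma lsp_mem: "i < length xs \<Longrightarrow> xs ! i \<in> lsp xs"
proof -
  assume i: "i < length xs"
  have "(\<Sum>j<length xs. smul (if j = i then 1 else 0) (xs ! j)) = (\<Sum>j<length xs. if j = i then xs ! i else 0)"
    by (intro sum.cong) auto
  also have "\<dots> = xs ! i" using i by simp
  finally show ?thesis unfolding lsp_def by (intro CollectI exI[of _ "\<lambda>j. if j = i then 1 else 0"]) simp
qed

lemma lsp_set: "p \<in> set xs \<Longrightarrow> p \<in> lsp xs"
proof -
  assume "p \<in> set xs"
  then obtain i where "i < length xs" "p = xs ! i" by (auto simp: in_set_conv_nth)
  then show ?thesis using lsp_mem by simp
qed

lemma lsp_sum: "finite S \<Longrightarrow> (\<And>x. x \<in> S \<Longrightarrow> F x \<in> lsp xs) \<Longrightarrow> sum F S \<in> lsp xs"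
proof (induction S rule: finite_induct)
  case empty then show ?case using lsp_zero by simp
next
  case (insert x S)
  then show ?case using lsp_add[of "F x" xs "sum F S"] by simp
qed

lemma lsp_sub: "set xs \<subseteq> lsp ys \<Longrightarrow> lsp xs \<subseteq> lsp ys"
proof
  fix p assume s: "set xs \<subseteq> lsp ys" and "p \<in> lsp xs"
  then obtain c where "p = (\<Sum>i<length xs. smul (c i) (xs ! i))" unfolding lsp_def by blast
  moreover have "(\<Sum>i<length xs. smul (c i) (xs ! i)) \<in> lsp ys"
    using s by (intro lsp_sum lsp_smul) auto
  ultimately show "p \<in> lsp ys" by simp
qed

section \<open>Row spaces of Macaulay matrices\<close>

lemma macaulay_carrier: "macaulay cs xs \<in> carrier_mat (length xs) (length cs)"
  unfolding macaulay_def by simp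

lemma Phi_macaulay:
  fixes xs :: "(hmon \<Rightarrow>\<^sub>0 'k::field) list"
  assumes cs: "distinct cs" and ks: "\<forall>p\<in>set xs. Poly_Mapping.keys p \<subseteq> set cs"
    and y: "y \<in> carrier_vec (length xs)"
  shows "Phi cs (transpose_mat (macaulay cs xs) *\<^sub>v y) = (\<Sum>i<length xs. smul (y $ i) (xs ! i))"
proof (rule poly_mapping_eqI)
  fix m
  let ?A = "macaulay cs xs"
  have A: "?A \<in> carrier_mat (length xs) (length cs)" by (rule macaulay_carrier)
  show "Poly_Mapping.lookup (Phi cs (transpose_mat ?A *\<^sub>v y)) m =
        Poly_Mapping.lookup (\<Sum>i<length xs. smul (y $ i) (xs ! i)) m"
  proof (cases "m \<in> set cs")
    case True
    then obtain j where j: "j < length cs" "m = cs ! j" by (auto simp: in_set_conv_nth)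
    have "Poly_Mapping.lookup (Phi cs (transpose_mat ?A *\<^sub>v y)) m = (transpose_mat ?A *\<^sub>v y) $ j"
      using lookup_Phi_nth[OF cs j(1)] j(2) by simp
    also have "\<dots> = (\<Sum>k\<in>{0..<length xs}. ?A $$ (k, j) * y $ k)" using tmv_index[OF A y j(1)] .
    also have "\<dots> = (\<Sum>k<length xs. y $ k * Poly_Mapping.lookup (xs ! k) m)"
      using j unfolding macaulay_def by (intro sum.cong) (auto simp: mult.commute)
    also have "\<dots> = Poly_Mapping.lookup (\<Sum>i<length xs. smul (y $ i) (xs ! i)) m"
      by (simp add: lookup_sum lookup_smul)
    finally show ?thesis .
  next
    case False
    have "Poly_Mapping.lookup (\<Sum>i<length xs. smul (y $ i) (xs ! i)) m = (\<Sum>i<length xs. y $ i * Poly_Mapping.lookup (xs ! i) m)"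
      by (simp add: lookup_sum lookup_smul)
    also have "\<dots> = 0"
    proof (rule sum.neutral, intro ballI)
      fix i assume "i \<in> {..<length xs}"
      then have "xs ! i \<in> set xs" by simp
      then have "m \<notin> Poly_Mapping.keys (xs ! i)" using ks False by blast
      then show "y $ i * Poly_Mapping.lookup (xs ! i) m = 0" by (simp add: in_keys_iff)
    qed
    finally show ?thesis using lookup_Phi_notin[OF False] by simp
  qed
qed

lemma Phi_RS_macaulay:
  fixes xs :: "(hmon \<Rightarrow>\<^sub>0 'k::field) list"
  assumes cs: "distinct cs" and ks: "\<forall>p\<in>set xs. Poly_Mapping.keys p \<subseteq> set cs"
  shows "Phi cs ` RS (macaulay cs xs) = lsp xs"
proof
  have dr: "dim_row (macaulay cs xs) = length xs" unfolding macaulay_def by simp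
  show "Phi cs ` RS (macaulay cs xs) \<subseteq> lsp xs"
  proof
    fix p assume "p \<in> Phi cs ` RS (macaulay cs xs)"
    then obtain y where y: "y \<in> carrier_vec (length xs)" "p = Phi cs (transpose_mat (macaulay cs xs) *\<^sub>v y)"
      unfolding RS_def dr by blast
    then show "p \<in> lsp xs" using Phi_macaulay[OF cs ks y(1)] unfolding lsp_def by auto
  qed
  show "lsp xs \<subseteq> Phi cs ` RS (macaulay cs xs)"
  proof
    fix p assume "p \<in> lsp xs"
    then obtain c where c: "p = (\<Sum>i<length xs. smul (c i) (xs ! i))" unfolding lsp_def by blast
    define y where "y = vec (length xs) c"
    have y: "y \<in> carrier_vec (length xs)" unfolding y_def by simp
    have "p = (\<Sum>i<length xs. smul (y $ i) (xs ! i))" unfolding c y_def by (intro sum.cong) auto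
    then have "p = Phi cs (transpose_mat (macaulay cs xs) *\<^sub>v y)" using Phi_macaulay[OF cs ks y] by simp
    moreover have "transpose_mat (macaulay cs xs) *\<^sub>v y \<in> RS (macaulay cs xs)" unfolding RS_def dr using y by blast
    ultimately show "p \<in> Phi cs ` RS (macaulay cs xs)" by blast
  qed
qed

lemma RS_macaulay_eq:
  fixes xs ys :: "(hmon \<Rightarrow>\<^sub>0 'k::field) list"
  assumes cs: "distinct cs" and ksx: "\<forall>p\<in>set xs. Poly_Mapping.keys p \<subseteq> set cs"
    and ksy: "\<forall>p\<in>set ys. Poly_Mapping.keys p \<subseteq> set cs" and L: "lsp xs = lsp ys"
  shows "RS (macaulay cs xs) = RS (macaulay cs ys)"
proof -
  have s1: "RS (macaulay cs xs) \<subseteq> carrier_vec (length cs)" by (rule RS_sub[OF macaulay_carrier])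
  have s2: "RS (macaulay cs ys) \<subseteq> carrier_vec (length cs)" by (rule RS_sub[OF macaulay_carrier])
  have inj: "inj_on (Phi cs) (carrier_vec (length cs))"
    using Phi_inj[OF cs] by (auto simp: inj_on_def)
  have "Phi cs ` RS (macaulay cs xs) = Phi cs ` RS (macaulay cs ys)"
    using Phi_RS_macaulay[OF cs ksx] Phi_RS_macaulay[OF cs ksy] L by simp
  then show ?thesis using inj_on_image_eq_iff[OF inj s1 s2] by simp
qed

lemma full_rank_macaulay:
  fixes xs :: "(hmon \<Rightarrow>\<^sub>0 'k::field) list"
  assumes cs: "distinct cs" and ks: "\<forall>p\<in>set xs. Poly_Mapping.keys p \<subseteq> set cs"
    and ind: "\<And>c. (\<Sum>i<length xs. smul (c i) (xs ! i)) = 0 \<Longrightarrow> \<forall>i<length xs. c i = 0"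
  shows "full_rank (macaulay cs xs)"
proof (rule full_rank_indep[OF macaulay_carrier])
  fix y assume y: "y \<in> carrier_vec (length xs)" and z: "transpose_mat (macaulay cs xs) *\<^sub>v y = 0\<^sub>v (length cs)"
  have "(\<Sum>i<length xs. smul (y $ i) (xs ! i)) = 0"
    using Phi_macaulay[OF cs ks y] z Phi_zero[of cs] by metis
  then have "\<forall>i<length xs. y $ i = 0" by (rule ind)
  then show "y = 0\<^sub>v (length xs)" using y by (intro eq_vecI) auto
qed




lemma sum_split_add: "(\<Sum>i<a+b. F i) = (\<Sum>i<a. F i) + (\<Sum>j<b. F (a + j))"
  for a b :: nat and F :: "nat \<Rightarrow> 'a::comm_monoid_add"
  by (induction b) (auto simp: add.assoc)

lemma keys_hring: "p \<in> hring n M \<Longrightarrow> Poly_Mapping.keys p \<subseteq> SMh n M"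
  unfolding hring_def by blast

lemma mons_SMh: "mons n M E \<subseteq> SMh n M"
  unfolding mons_def by blast

lemma keys_mult_SMh:
  assumes "Poly_Mapping.keys p \<subseteq> SMh n M" "Poly_Mapping.keys q \<subseteq> SMh n M"
  shows "Poly_Mapping.keys (p * q) \<subseteq> SMh n M"
proof
  fix m assume "m \<in> Poly_Mapping.keys (p * q)"
  then obtain a b where "a \<in> Poly_Mapping.keys p" "b \<in> Poly_Mapping.keys q" "m = a + b"
    using keys_mult[of p q] by blast
  then show "m \<in> SMh n M" using assms SMh_add by blast
qed

lemma keys_mult_snd:
  assumes "\<forall>a\<in>Poly_Mapping.keys p. snd a = x" "\<forall>b\<in>Poly_Mapping.keys q. snd b = y"
  shows "\<forall>m\<in>Poly_Mapping.keys (p * q). snd m = x + y"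
proof
  fix m assume "m \<in> Poly_Mapping.keys (p * q)"
  then obtain a b where "a \<in> Poly_Mapping.keys p" "b \<in> Poly_Mapping.keys q" "m = a + b"
    using keys_mult[of p q] by blast
  then show "snd m = x + y" using assms by simp
qed

locale sctx =
  fixes n :: nat and M :: "(nat \<Rightarrow> real) set" and lt :: "zvec \<Rightarrow> zvec \<Rightarrow> bool"
    and I G :: "(hmon \<Rightarrow>\<^sub>0 'k::field) set"
  assumes poly: "polytope n M" and mo: "monomial_order n M lt"
    and Iid: "is_ideal n M I" and GB: "sparse_GB n M lt I G"
    and homG: "\<forall>g\<in>G. homogeneous g"
begin

lemma I_hring: "p \<in> I \<Longrightarrow> Poly_Mapping.keys p \<subseteq> SMh n M"
  using Iid keys_hring unfolding is_ideal_def by blast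

lemma G_I: "g \<in> G \<Longrightarrow> g \<in> I"
  using GB unfolding sparse_GB_def by blast

lemma I_add: "p \<in> I \<Longrightarrow> q \<in> I \<Longrightarrow> p + q \<in> I"
  using Iid unfolding is_ideal_def by blast

lemma I_zero: "0 \<in> I"
  using Iid unfolding is_ideal_def by blast

lemma I_mult: "r \<in> hring n M \<Longrightarrow> p \<in> I \<Longrightarrow> r * p \<in> I"
  using Iid unfolding is_ideal_def by blast

lemma I_smul: "p \<in> I \<Longrightarrow> smul c p \<in> I"
proof -
  assume p: "p \<in> I"
  have "Poly_Mapping.single 0 c \<in> hring n M"
    unfolding hring_def using SMh.SMh_zero by auto
  then show ?thesis unfolding smul_def using I_mult p by blast
qed

lemma I_neg: "p \<in> I \<Longrightarrow> - p \<in> I"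
  using I_smul[of p "-1"] by (simp add: smul_neg)

lemma I_diff: "p \<in> I \<Longrightarrow> q \<in> I \<Longrightarrow> p - q \<in> I"
proof -
  assume "p \<in> I" "q \<in> I"
  then have "p + - q \<in> I" by (intro I_add I_neg)
  then show ?thesis by (simp only: diff_conv_add_uminus)
qed

lemma I_sum: "finite S \<Longrightarrow> (\<And>x. x \<in> S \<Longrightarrow> F x \<in> I) \<Longrightarrow> sum F S \<in> I"
proof (induction S rule: finite_induct)
  case empty then show ?case using I_zero by simp
next
  case (insert x S)
  then show ?case using I_add[of "F x" "sum F S"] by simp
qed

lemma xmon_hring: "t \<in> SMh n M \<Longrightarrow> xmon t \<in> hring n M"
  unfolding hring_def xmon_def by simp

lemma G_homog:
  assumes g: "g \<in> G" "g \<noteq> 0"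
  shows "\<forall>m\<in>Poly_Mapping.keys g. snd m = snd (LM n M lt g)"
proof -
  obtain e where e: "is_homog e g" using homG g unfolding homogeneous_def by blast
  have "LM n M lt g \<in> Poly_Mapping.keys g" using LM_props(1)[OF mo I_hring[OF G_I[OF g(1)]] g(2)] .
  then show ?thesis using e unfolding is_homog_def by auto
qed

lemma div_row:
  assumes g: "g \<in> G" "g \<noteq> 0" and dv: "ddvd n M (LM n M lt g) m" and m: "m \<in> mons n M E"
  shows "\<exists>t. t \<in> SMh n M \<and> t + LM n M lt g = m \<and> sdeg n M t + sdeg n M (LM n M lt g) = sdeg n M m \<and>
    xmon t * g \<in> I \<and> Poly_Mapping.keys (xmon t * g) \<subseteq> mons n M E \<and> xmon t * g \<noteq> 0 \<and>
    LM n M lt (xmon t * g) = m"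
proof -
  let ?L = "LM n M lt g"
  obtain t where t: "t \<in> SMh n M" "?L + t = m" "sdeg n M ?L + sdeg n M t = sdeg n M m"
    using dv unfolding ddvd_def by blast
  have kg: "Poly_Mapping.keys g \<subseteq> SMh n M" using I_hring[OF G_I[OF g(1)]] .
  have hom: "\<forall>b\<in>Poly_Mapping.keys g. snd b = snd ?L" using G_homog[OF g] .
  have t2: "t + ?L = m" using t(2) by (simp add: add.commute)
  have deg: "sdeg n M t + sdeg n M ?L = sdeg n M (t + ?L)" using t(3) t2 by simp
  have LMr: "LM n M lt (xmon t * g) = m" using shift_LM[OF mo kg g(2) hom t(1) deg] t2 by simp
  have Lk: "?L \<in> Poly_Mapping.keys g" using LM_props(1)[OF mo kg g(2)] .
  have "m \<in> Poly_Mapping.keys (xmon t * g)" using Lk t2 by (auto simp: keys_xmon_mult)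
  then have nz: "xmon t * g \<noteq> 0" by auto
  have inI: "xmon t * g \<in> I" using I_mult[OF xmon_hring[OF t(1)] G_I[OF g(1)]] .
  have ks: "Poly_Mapping.keys (xmon t * g) \<subseteq> mons n M E"
  proof
    fix x assume "x \<in> Poly_Mapping.keys (xmon t * g)"
    then obtain b where b: "b \<in> Poly_Mapping.keys g" "x = t + b" by (auto simp: keys_xmon_mult)
    have "x \<in> SMh n M" using b kg t(1) SMh_add by blast
    moreover have "snd x = snd m" using b hom t2 by auto
    ultimately show "x \<in> mons n M E" using m unfolding mons_def by simp
  qed
  have "sdeg n M t + sdeg n M ?L = sdeg n M m" using t(3) by simp
  then show ?thesis using t(1) t2 inI ks nz LMr by blast
qed

lemma red_step:
  assumes p: "p \<noteq> 0" "Poly_Mapping.keys p \<subseteq> mons n M E"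
    and r: "r \<noteq> 0" "Poly_Mapping.keys r \<subseteq> mons n M E" "LM n M lt r = LM n M lt p"
  defines "p' \<equiv> p - smul (Poly_Mapping.lookup p (LM n M lt p) / Poly_Mapping.lookup r (LM n M lt p)) r"
  shows "Poly_Mapping.keys p' \<subseteq> mons n M E" "p' \<noteq> 0 \<Longrightarrow> hless n M lt (LM n M lt p') (LM n M lt p)"
proof -
  let ?L = "LM n M lt p"
  have kp: "Poly_Mapping.keys p \<subseteq> SMh n M" using p(2) mons_SMh by blast
  have kr: "Poly_Mapping.keys r \<subseteq> SMh n M" using r(2) mons_SMh by blast
  have kp': "Poly_Mapping.keys p' \<subseteq> Poly_Mapping.keys p \<union> Poly_Mapping.keys r"
  proof -
    have "Poly_Mapping.keys p' \<subseteq> Poly_Mapping.keys p \<union> Poly_Mapping.keys (smul (Poly_Mapping.lookup p (LM n M lt p) / Poly_Mapping.lookup r (LM n M lt p)) r)"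
      unfolding p'_def by (rule keys_diff)
    then show ?thesis using keys_smul[of _ r] by blast
  qed
  then show "Poly_Mapping.keys p' \<subseteq> mons n M E" using p(2) r(2) by blast
  have d: "Poly_Mapping.lookup r ?L \<noteq> 0" using LM_props(1)[OF mo kr r(1)] r(3) by (simp add: in_keys_iff)
  have z: "Poly_Mapping.lookup p' ?L = 0" unfolding p'_def using d by (simp add: lookup_minus lookup_smul)
  assume nz: "p' \<noteq> 0"
  have kp'S: "Poly_Mapping.keys p' \<subseteq> SMh n M" using kp' kp kr by blast
  have Lp': "LM n M lt p' \<in> Poly_Mapping.keys p'" using LM_props(1)[OF mo kp'S nz] .
  then have ne: "LM n M lt p' \<noteq> ?L" using z by (auto simp: in_keys_iff)
  show "hless n M lt (LM n M lt p') ?L"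
  proof (cases "LM n M lt p' \<in> Poly_Mapping.keys p")
    case True
    then show ?thesis using LM_props(2)[OF mo kp p(1)] ne by blast
  next
    case False
    then have "LM n M lt p' \<in> Poly_Mapping.keys r" using kp' Lp' by blast
    then show ?thesis using LM_props(2)[OF mo kr r(1)] ne r(3) by auto
  qed
qed

lemma lm_induct:
  assumes base: "Q 0"
    and step: "\<And>p. Poly_Mapping.keys p \<subseteq> mons n M E \<Longrightarrow> p \<noteq> 0 \<Longrightarrow>
       (\<And>q. Poly_Mapping.keys q \<subseteq> mons n M E \<Longrightarrow> q \<noteq> 0 \<Longrightarrow> hless n M lt (LM n M lt q) (LM n M lt p) \<Longrightarrow> Q q) \<Longrightarrow> Q p"
  shows "Poly_Mapping.keys p \<subseteq> mons n M E \<Longrightarrow> Q (p :: hmon \<Rightarrow>\<^sub>0 'k)"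
proof (induction "card {m \<in> mons n M E. hless n M lt m (LM n M lt p)}" arbitrary: p rule: less_induct)
  case less
  show ?case
  proof (cases "p = 0")
    case True then show ?thesis using base by simp
  next
    case False
    show ?thesis
    proof (rule step[OF less.prems False])
      fix q :: "hmon \<Rightarrow>\<^sub>0 'k"
      assume q: "Poly_Mapping.keys q \<subseteq> mons n M E" "q \<noteq> 0" "hless n M lt (LM n M lt q) (LM n M lt p)"
      have kq: "Poly_Mapping.keys q \<subseteq> SMh n M" using q(1) mons_SMh by blast
      have kp: "Poly_Mapping.keys p \<subseteq> SMh n M" using less.prems mons_SMh by blast
      have Lq: "LM n M lt q \<in> mons n M E" using LM_props(1)[OF mo kq q(2)] q(1) by blast
      have Lp: "LM n M lt p \<in> SMh n M" using LM_props(1)[OF mo kp False] kp by blast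
      have LqS: "LM n M lt q \<in> SMh n M" using Lq mons_SMh by blast
      have sub: "{m \<in> mons n M E. hless n M lt m (LM n M lt q)} \<subset> {m \<in> mons n M E. hless n M lt m (LM n M lt p)}"
      proof
        show "{m \<in> mons n M E. hless n M lt m (LM n M lt q)} \<subseteq> {m \<in> mons n M E. hless n M lt m (LM n M lt p)}"
        proof
          fix m assume "m \<in> {m \<in> mons n M E. hless n M lt m (LM n M lt q)}"
          then have m: "m \<in> mons n M E" "hless n M lt m (LM n M lt q)" by auto
          have "m \<in> SMh n M" using m(1) mons_SMh by blast
          then have "hless n M lt m (LM n M lt p)" using hless_trans[OF mo _ LqS Lp m(2) q(3)] by blast
          then show "m \<in> {m \<in> mons n M E. hless n M lt m (LM n M lt p)}" using m(1) by blast
        qed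
        have "LM n M lt q \<notin> {m \<in> mons n M E. hless n M lt m (LM n M lt q)}" using hless_irrefl[OF mo LqS] by blast
        moreover have "LM n M lt q \<in> {m \<in> mons n M E. hless n M lt m (LM n M lt p)}" using Lq q(3) by blast
        ultimately show "{m \<in> mons n M E. hless n M lt m (LM n M lt q)} \<noteq> {m \<in> mons n M E. hless n M lt m (LM n M lt p)}"
          by blast
      qed
      have fin: "finite {m \<in> mons n M E. hless n M lt m (LM n M lt p)}" using finite_mons[OF poly] by simp
      have "card {m \<in> mons n M E. hless n M lt m (LM n M lt q)} < card {m \<in> mons n M E. hless n M lt m (LM n M lt p)}"
        using psubset_card_mono[OF fin sub] .
      then show "Q q" using less.hyps q(1) by blast
    qed
  qed
qed

end




context sctx
begin

lemma shift_row:
  assumes g: "g \<in> G" "g \<noteq> 0" and t: "t \<in> SMh n M" and tm: "t + LM n M lt g = m"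
    and deg: "sdeg n M t + sdeg n M (LM n M lt g) = sdeg n M m" and m: "m \<in> mons n M E"
  shows "xmon t * g \<in> I" "Poly_Mapping.keys (xmon t * g) \<subseteq> mons n M E" "xmon t * g \<noteq> 0"
    "LM n M lt (xmon t * g) = m"
proof -
  let ?L = "LM n M lt g"
  have kg: "Poly_Mapping.keys g \<subseteq> SMh n M" using I_hring[OF G_I[OF g(1)]] .
  have hom: "\<forall>b\<in>Poly_Mapping.keys g. snd b = snd ?L" using G_homog[OF g] .
  have deg': "sdeg n M t + sdeg n M ?L = sdeg n M (t + ?L)" using deg tm by simp
  show "LM n M lt (xmon t * g) = m" using shift_LM[OF mo kg g(2) hom t deg'] tm by simp
  have Lk: "?L \<in> Poly_Mapping.keys g" using LM_props(1)[OF mo kg g(2)] .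
  have "m \<in> Poly_Mapping.keys (xmon t * g)" using Lk tm by (auto simp: keys_xmon_mult)
  then show "xmon t * g \<noteq> 0" by auto
  show "xmon t * g \<in> I" using I_mult[OF xmon_hring[OF t] G_I[OF g(1)]] .
  show "Poly_Mapping.keys (xmon t * g) \<subseteq> mons n M E"
  proof
    fix x assume "x \<in> Poly_Mapping.keys (xmon t * g)"
    then obtain b where b: "b \<in> Poly_Mapping.keys g" "x = t + b" by (auto simp: keys_xmon_mult)
    have "x \<in> SMh n M" using b kg t SMh_add by blast
    moreover have "snd x = snd m" using b hom tm by auto
    ultimately show "x \<in> mons n M E" using m unfolding mons_def by simp
  qed
qed

lemma Rset_elem:
  assumes phi: "\<forall>m\<in>Nset n M lt G D. \<phi> m \<in> G \<and> \<phi> m \<noteq> 0 \<and> ddvd n M (LM n M lt (\<phi> m)) m"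
    and r: "r \<in> Rset n M lt G D \<phi>"
  shows "r \<in> I" "r \<noteq> 0" "Poly_Mapping.keys r \<subseteq> mons n M D"
    "r = xmon (LM n M lt r - LM n M lt (\<phi> (LM n M lt r))) * \<phi> (LM n M lt r)"
proof -
  obtain m t where mt: "r = xmon t * \<phi> m" "m \<in> Nset n M lt G D" "t \<in> SMh n M"
    "t + LM n M lt (\<phi> m) = m" "sdeg n M t + sdeg n M (LM n M lt (\<phi> m)) = sdeg n M m"
    using r unfolding Rset_def by blast
  have mD: "m \<in> mons n M D" using mt(2) unfolding Nset_def by blast
  have g: "\<phi> m \<in> G" "\<phi> m \<noteq> 0" using phi mt(2) by auto
  note sr = shift_row[OF g mt(3,4,5) mD]
  show "r \<in> I" "r \<noteq> 0" "Poly_Mapping.keys r \<subseteq> mons n M D" using sr mt(1) by auto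
  have L: "LM n M lt r = m" using sr(4) mt(1) by simp
  have "t = m - LM n M lt (\<phi> m)" using mt(4) by (simp add: eq_diff_eq)
  then show "r = xmon (LM n M lt r - LM n M lt (\<phi> (LM n M lt r))) * \<phi> (LM n M lt r)"
    using L mt(1) by simp
qed

lemma finite_Rset: "finite (Rset n M lt G D \<phi>)"
proof -
  have "Rset n M lt G D \<phi> \<subseteq> (\<lambda>m. xmon (m - LM n M lt (\<phi> m)) * \<phi> m) ` mons n M D"
  proof
    fix r assume "r \<in> Rset n M lt G D \<phi>"
    then obtain m t where mt: "r = xmon t * \<phi> m" "m \<in> Nset n M lt G D"
      "t + LM n M lt (\<phi> m) = m"
      unfolding Rset_def by blast
    have "t = m - LM n M lt (\<phi> m)" using mt(3) by (simp add: eq_diff_eq)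
    moreover have "m \<in> mons n M D" using mt(2) unfolding Nset_def by blast
    ultimately show "r \<in> (\<lambda>m. xmon (m - LM n M lt (\<phi> m)) * \<phi> m) ` mons n M D" using mt(1) by blast
  qed
  then show ?thesis using finite_mons[OF poly] finite_subset by blast
qed

lemma bset_sub: "bset n M lt G D d \<subseteq> {m \<in> SMh n M. snd m \<le> int D}"
proof
  fix m assume "m \<in> bset n M lt G D d"
  then have "m \<in> SMh n M" "snd m + int d = int D" unfolding bset_def by blast+
  then show "m \<in> {m \<in> SMh n M. snd m \<le> int D}" by simp
qed

lemma finite_bset: "finite (bset n M lt G D d)"
  using finite_subset[OF bset_sub finite_SMh_le[OF poly]] .

lemma finite_Bf: "finite {xmon s * f | s. s \<in> bset n M lt G D d}"
proof -
  have "{xmon s * f | s. s \<in> bset n M lt G D d} = (\<lambda>s. xmon s * f) ` bset n M lt G D d" by blast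
  then show ?thesis using finite_bset by simp
qed

lemma finite_MD:
  assumes fG: "finite G"
  shows "finite {xmon u * h | u h e. h \<in> G \<union> {f} \<and> is_homog e h \<and> u \<in> SMh n M \<and> snd u + int e = int D}"
proof -
  have "{xmon u * h | u h e. h \<in> G \<union> {f} \<and> is_homog e h \<and> u \<in> SMh n M \<and> snd u + int e = int D}
     \<subseteq> (\<lambda>(u, h). xmon u * h) ` ({m \<in> SMh n M. snd m \<le> int D} \<times> (G \<union> {f}))"
  proof
    fix x assume "x \<in> {xmon u * h | u h e. h \<in> G \<union> {f} \<and> is_homog e h \<and> u \<in> SMh n M \<and> snd u + int e = int D}"
    then obtain u h e where x: "x = xmon u * h" "h \<in> G \<union> {f}" "u \<in> SMh n M" "snd u + int e = int D" by blast
    then have "snd u \<le> int D" by simp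
    then show "x \<in> (\<lambda>(u, h). xmon u * h) ` ({m \<in> SMh n M. snd m \<le> int D} \<times> (G \<union> {f}))"
      using x by force
  qed
  moreover have "finite ({m \<in> SMh n M. snd m \<le> int D} \<times> (G \<union> {f}))" using finite_SMh_le[OF poly] fG by simp
  ultimately show ?thesis using finite_subset by blast
qed

lemma claimA:
  assumes phi: "\<forall>m\<in>Nset n M lt G D. \<phi> m \<in> G \<and> \<phi> m \<noteq> 0 \<and> ddvd n M (LM n M lt (\<phi> m)) m"
    and kp: "Poly_Mapping.keys p \<subseteq> mons n M D" and pI: "p \<in> I"
  shows "p \<in> lsp (enum_set (Rset n M lt G D \<phi>))"
proof -
  let ?Rl = "enum_set (Rset n M lt G D \<phi>)"
  have setR: "set ?Rl = Rset n M lt G D \<phi>" using enum_set[OF finite_Rset] by blast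
  have "p \<in> I \<longrightarrow> p \<in> lsp ?Rl"
  proof (rule lm_induct[of "\<lambda>p. p \<in> I \<longrightarrow> p \<in> lsp ?Rl" D p, OF _ _ kp])
    show "0 \<in> I \<longrightarrow> 0 \<in> lsp ?Rl" using lsp_zero by blast
  next
    fix p :: "hmon \<Rightarrow>\<^sub>0 'k"
    assume kp: "Poly_Mapping.keys p \<subseteq> mons n M D" and nz: "p \<noteq> 0"
      and IH: "\<And>q. Poly_Mapping.keys q \<subseteq> mons n M D \<Longrightarrow> q \<noteq> 0 \<Longrightarrow> hless n M lt (LM n M lt q) (LM n M lt p)
        \<Longrightarrow> q \<in> I \<longrightarrow> q \<in> lsp ?Rl"
    show "p \<in> I \<longrightarrow> p \<in> lsp ?Rl"
    proof
      assume pI: "p \<in> I"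
      let ?m = "LM n M lt p"
      have kpS: "Poly_Mapping.keys p \<subseteq> SMh n M" using kp mons_SMh by blast
      have mD: "?m \<in> mons n M D" using LM_props(1)[OF mo kpS nz] kp by blast
      obtain g where "g \<in> G" "g \<noteq> 0" "ddvd n M (LM n M lt g) ?m"
        using GB pI nz unfolding sparse_GB_def by blast
      then have mN: "?m \<in> Nset n M lt G D" unfolding Nset_def using mD by blast
      have g: "\<phi> ?m \<in> G" "\<phi> ?m \<noteq> 0" and dv: "ddvd n M (LM n M lt (\<phi> ?m)) ?m" using phi mN by auto
      obtain t where t: "t \<in> SMh n M" "LM n M lt (\<phi> ?m) + t = ?m"
        "sdeg n M (LM n M lt (\<phi> ?m)) + sdeg n M t = sdeg n M ?m"
        using dv unfolding ddvd_def by blast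
      have t2: "t + LM n M lt (\<phi> ?m) = ?m" using t(2) by (simp add: add.commute)
      have t3: "sdeg n M t + sdeg n M (LM n M lt (\<phi> ?m)) = sdeg n M ?m" using t(3) by simp
      note sr = shift_row[OF g t(1) t2 t3 mD]
      define r where "r = xmon t * \<phi> ?m"
      have rR: "r \<in> Rset n M lt G D \<phi>" unfolding Rset_def r_def using mN t(1) t2 t3 by blast
      then have rL: "r \<in> lsp ?Rl" using setR lsp_set by blast
      define c where "c = Poly_Mapping.lookup p ?m / Poly_Mapping.lookup r ?m"
      define p' where "p' = p - smul c r"
      have rs: "r \<in> I" "Poly_Mapping.keys r \<subseteq> mons n M D" "r \<noteq> 0" "LM n M lt r = ?m" using sr r_def by auto
      note rst = red_step[OF nz kp rs(3) rs(2) rs(4)]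
      have kp': "Poly_Mapping.keys p' \<subseteq> mons n M D" using rst(1) unfolding p'_def c_def .
      have p'I: "p' \<in> I" unfolding p'_def using I_diff[OF pI I_smul[OF rs(1)]] .
      have "p' \<in> lsp ?Rl"
      proof (cases "p' = 0")
        case True then show ?thesis using lsp_zero by simp
      next
        case False
        then have "hless n M lt (LM n M lt p') ?m" using rst(2) unfolding p'_def c_def by blast
        then show ?thesis using IH[OF kp' False] p'I by blast
      qed
      moreover have "p = p' + smul c r" unfolding p'_def by simp
      ultimately show "p \<in> lsp ?Rl" using lsp_add lsp_smul[OF rL] by metis
    qed
  qed
  then show ?thesis using pI by blast
qed

end




context sctx
begin

lemma not_bset:
  assumes m: "m \<in> mons n M E" and dD: "int E + int d = int D" and nb: "m \<notin> bset n M lt G D d"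
  shows "\<exists>g\<in>G. g \<noteq> 0 \<and> ddvd n M (LM n M lt g) m"
proof -
  have "m \<in> SMh n M" "snd m + int d = int D" using m dD unfolding mons_def by auto
  then show ?thesis using nb unfolding bset_def by blast
qed

lemma claimB:
  assumes dD: "int E + int d = int D" and kp: "Poly_Mapping.keys p \<subseteq> mons n M E"
  shows "\<exists>q. Poly_Mapping.keys q \<subseteq> bset n M lt G D d \<and> p - q \<in> I"
proof (rule lm_induct[of "\<lambda>p. \<exists>q. Poly_Mapping.keys q \<subseteq> bset n M lt G D d \<and> p - q \<in> I" E p, OF _ _ kp])
  show "\<exists>q. Poly_Mapping.keys q \<subseteq> bset n M lt G D d \<and> (0::hmon \<Rightarrow>\<^sub>0 'k) - q \<in> I"
    using I_zero by (intro exI[of _ 0]) simp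
next
  fix p :: "hmon \<Rightarrow>\<^sub>0 'k"
  assume kp: "Poly_Mapping.keys p \<subseteq> mons n M E" and nz: "p \<noteq> 0"
    and IH: "\<And>q. Poly_Mapping.keys q \<subseteq> mons n M E \<Longrightarrow> q \<noteq> 0 \<Longrightarrow> hless n M lt (LM n M lt q) (LM n M lt p)
      \<Longrightarrow> \<exists>q'. Poly_Mapping.keys q' \<subseteq> bset n M lt G D d \<and> q - q' \<in> I"
  let ?m = "LM n M lt p"
  let ?B = "bset n M lt G D d"
  have kpS: "Poly_Mapping.keys p \<subseteq> SMh n M" using kp mons_SMh by blast
  have mE: "?m \<in> mons n M E" using LM_props(1)[OF mo kpS nz] kp by blast
  have IH': "\<exists>q'. Poly_Mapping.keys q' \<subseteq> ?B \<and> p' - q' \<in> I"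
    if "Poly_Mapping.keys p' \<subseteq> mons n M E" "p' \<noteq> 0 \<Longrightarrow> hless n M lt (LM n M lt p') ?m" for p'
  proof (cases "p' = 0")
    case True then show ?thesis using I_zero by (intro exI[of _ 0]) simp
  next
    case False then show ?thesis using IH[OF that(1) False that(2)[OF False]] by blast
  qed
  show "\<exists>q. Poly_Mapping.keys q \<subseteq> ?B \<and> p - q \<in> I"
  proof (cases "?m \<in> ?B")
    case True
    define r :: "hmon \<Rightarrow>\<^sub>0 'k" where "r = xmon ?m"
    have kr: "Poly_Mapping.keys r = {?m}" unfolding r_def xmon_def by simp
    have rnz: "r \<noteq> 0" using kr by auto
    have krE: "Poly_Mapping.keys r \<subseteq> mons n M E" using kr mE by simp
    have krS: "Poly_Mapping.keys r \<subseteq> SMh n M" using krE mons_SMh by blast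
    have Lr: "LM n M lt r = ?m" using LM_eq[OF mo krS] kr by simp
    define c where "c = Poly_Mapping.lookup p ?m / Poly_Mapping.lookup r ?m"
    define p' where "p' = p - smul c r"
    note rst = red_step[OF nz kp rnz krE Lr]
    obtain q' where q': "Poly_Mapping.keys q' \<subseteq> ?B" "p' - q' \<in> I"
      using IH'[of p'] rst unfolding p'_def c_def by blast
    have "Poly_Mapping.keys (q' + smul c r) \<subseteq> ?B"
    proof -
      have "Poly_Mapping.keys (q' + smul c r) \<subseteq> Poly_Mapping.keys q' \<union> Poly_Mapping.keys (smul c r)" by (rule keys_add)
      also have "\<dots> \<subseteq> Poly_Mapping.keys q' \<union> Poly_Mapping.keys r" using keys_smul[of c r] by blast
      finally show ?thesis using q'(1) kr True by auto
    qed
    moreover have "p - (q' + smul c r) = p' - q'" unfolding p'_def by (simp add: algebra_simps)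
    ultimately show ?thesis using q'(2) by metis
  next
    case False
    obtain g where g: "g \<in> G" "g \<noteq> 0" "ddvd n M (LM n M lt g) ?m" using not_bset[OF mE dD False] by blast
    obtain t where t: "t \<in> SMh n M" "LM n M lt g + t = ?m" "sdeg n M (LM n M lt g) + sdeg n M t = sdeg n M ?m"
      using g(3) unfolding ddvd_def by blast
    have t2: "t + LM n M lt g = ?m" using t(2) by (simp add: add.commute)
    have t3: "sdeg n M t + sdeg n M (LM n M lt g) = sdeg n M ?m" using t(3) by simp
    note sr = shift_row[OF g(1,2) t(1) t2 t3 mE]
    define r where "r = xmon t * g"
    have rs: "r \<in> I" "Poly_Mapping.keys r \<subseteq> mons n M E" "r \<noteq> 0" "LM n M lt r = ?m" using sr r_def by auto
    define c where "c = Poly_Mapping.lookup p ?m / Poly_Mapping.lookup r ?m"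
    define p' where "p' = p - smul c r"
    note rst = red_step[OF nz kp rs(3) rs(2) rs(4)]
    obtain q' where q': "Poly_Mapping.keys q' \<subseteq> ?B" "p' - q' \<in> I"
      using IH'[of p'] rst unfolding p'_def c_def by blast
    have "p - q' = (p' - q') + smul c r" unfolding p'_def by (simp add: algebra_simps)
    moreover have "(p' - q') + smul c r \<in> I" using I_add[OF q'(2) I_smul[OF rs(1)]] .
    ultimately show ?thesis using q'(1) by metis
  qed
qed

lemma MD_keys:
  assumes f: "f \<in> hpart n M d"
    and x: "x \<in> {xmon u * h | u h e. h \<in> G \<union> {f} \<and> is_homog e h \<and> u \<in> SMh n M \<and> snd u + int e = int D}"
  shows "Poly_Mapping.keys x \<subseteq> mons n M D"
proof -
  obtain u h e where x: "x = xmon u * h" "h \<in> G \<union> {f}" "is_homog e h" "u \<in> SMh n M" "snd u + int e = int D"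
    using x by blast
  have kh: "Poly_Mapping.keys h \<subseteq> SMh n M"
  proof (cases "h \<in> G")
    case True then show ?thesis using I_hring[OF G_I] by blast
  next
    case False then have "h = f" using x(2) by blast
    then show ?thesis using f keys_hring unfolding hpart_def by blast
  qed
  show ?thesis
  proof
    fix m assume "m \<in> Poly_Mapping.keys x"
    then obtain b where b: "b \<in> Poly_Mapping.keys h" "m = u + b" using x(1) by (auto simp: keys_xmon_mult)
    have "m \<in> SMh n M" using b kh x(4) SMh_add by blast
    moreover have "snd b = int e" using x(3) b(1) unfolding is_homog_def by blast
    then have "snd m = int D" using b x(5) by simp
    ultimately show "m \<in> mons n M D" unfolding mons_def by blast
  qed
qed

lemma lsp_eq:
  assumes phi: "\<forall>m\<in>Nset n M lt G D. \<phi> m \<in> G \<and> \<phi> m \<noteq> 0 \<and> ddvd n M (LM n M lt (\<phi> m)) m"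
    and f: "f \<in> hpart n M d" and fG: "finite G"
  shows "lsp (enum_set (Rset n M lt G D \<phi>) @ enum_set {xmon s * f | s. s \<in> bset n M lt G D d})
       = lsp (enum_set {xmon u * h | u h e. h \<in> G \<union> {f} \<and> is_homog e h \<and> u \<in> SMh n M \<and> snd u + int e = int D})"
    (is "lsp (?Rl @ ?Bl) = lsp ?Ml")
proof -
  let ?R = "Rset n M lt G D \<phi>"
  let ?Bf = "{xmon s * f | s. s \<in> bset n M lt G D d}"
  let ?MD = "{xmon u * h | u h e. h \<in> G \<union> {f} \<and> is_homog e h \<and> u \<in> SMh n M \<and> snd u + int e = int D}"
  have sR: "set ?Rl = ?R" using enum_set[OF finite_Rset] by blast
  have sB: "set ?Bl = ?Bf" using enum_set[OF finite_Bf] by blast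
  have sM: "set ?Ml = ?MD" using enum_set[OF finite_MD[OF fG]] by blast
  have fh: "f \<in> hring n M" "is_homog d f" using f unfolding hpart_def by auto
  have RM: "?R \<subseteq> ?MD"
  proof
    fix r assume "r \<in> ?R"
    then obtain m t where mt: "r = xmon t * \<phi> m" "m \<in> Nset n M lt G D" "t \<in> SMh n M"
      "t + LM n M lt (\<phi> m) = m"
      unfolding Rset_def by blast
    have g: "\<phi> m \<in> G" "\<phi> m \<noteq> 0" using phi mt(2) by auto
    have kg: "Poly_Mapping.keys (\<phi> m) \<subseteq> SMh n M" using I_hring[OF G_I[OF g(1)]] .
    have LS: "LM n M lt (\<phi> m) \<in> SMh n M" using LM_props(1)[OF mo kg g(2)] kg by blast
    define e where "e = nat (snd (LM n M lt (\<phi> m)))"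
    have e: "int e = snd (LM n M lt (\<phi> m))" unfolding e_def using SMh_snd[OF LS] by simp
    have hom: "is_homog e (\<phi> m)" unfolding is_homog_def using G_homog[OF g] e by simp
    have "snd m = int D" using mt(2) unfolding Nset_def mons_def by blast
    then have "snd t + int e = int D" using mt(4) e by (metis snd_add)
    then show "r \<in> ?MD" using mt(1,3) g(1) hom by blast
  qed
  have BM: "?Bf \<subseteq> ?MD"
  proof
    fix x assume "x \<in> ?Bf"
    then obtain s where s: "x = xmon s * f" "s \<in> bset n M lt G D d" by blast
    have "s \<in> SMh n M" "snd s + int d = int D" using s(2) unfolding bset_def by blast+
    then show "x \<in> ?MD" using s(1) fh(2) by blast
  qed
  have sub1: "lsp (?Rl @ ?Bl) \<subseteq> lsp ?Ml"
  proof (rule lsp_sub, rule subsetI)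
    fix x assume "x \<in> set (?Rl @ ?Bl)"
    then have "x \<in> ?R \<or> x \<in> ?Bf" using sR sB by simp
    then have "x \<in> ?MD" using RM BM by blast
    then have "x \<in> set ?Ml" using sM by simp
    then show "x \<in> lsp ?Ml" by (rule lsp_set)
  qed
  have RL: "lsp ?Rl \<subseteq> lsp (?Rl @ ?Bl)"
  proof (rule lsp_sub, rule subsetI)
    fix x assume "x \<in> set ?Rl"
    then have "x \<in> set (?Rl @ ?Bl)" by simp
    then show "x \<in> lsp (?Rl @ ?Bl)" by (rule lsp_set)
  qed
  have BL: "lsp ?Bl \<subseteq> lsp (?Rl @ ?Bl)"
  proof (rule lsp_sub, rule subsetI)
    fix x assume "x \<in> set ?Bl"
    then have "x \<in> set (?Rl @ ?Bl)" by simp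
    then show "x \<in> lsp (?Rl @ ?Bl)" by (rule lsp_set)
  qed
  have sub2: "lsp ?Ml \<subseteq> lsp (?Rl @ ?Bl)"
  proof (rule lsp_sub, rule subsetI)
    fix x assume "x \<in> set ?Ml"
    then have xM: "x \<in> ?MD" using sM by simp
    have kx: "Poly_Mapping.keys x \<subseteq> mons n M D" using MD_keys[OF f xM] .
    obtain u h e where x: "x = xmon u * h" "h \<in> G \<union> {f}" "is_homog e h" "u \<in> SMh n M" "snd u + int e = int D"
      using xM by blast
    show "x \<in> lsp (?Rl @ ?Bl)"
    proof (cases "h \<in> G")
      case True
      have "x \<in> I" using x(1) I_mult[OF xmon_hring[OF x(4)] G_I[OF True]] by simp
      then show ?thesis using claimA[OF phi kx] RL by blast
    next
      case False
      then have hf: "h = f" using x(2) by blast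
      show ?thesis
      proof (cases "f = 0")
        case True then show ?thesis using x(1) hf lsp_zero by simp
      next
        case False
        then have "Poly_Mapping.keys f \<noteq> {}" by simp
        then obtain b where b: "b \<in> Poly_Mapping.keys f" by blast
        have he: "is_homog e f" using x(3) hf by simp
        have "snd b = int e" using he b unfolding is_homog_def by blast
        moreover have "snd b = int d" using fh(2) b unfolding is_homog_def by blast
        ultimately have "int e = int d" by simp
        then have ed: "e = d" by simp
        define E where "E = nat (snd u)"
        have Eu: "int E = snd u" unfolding E_def using SMh_snd[OF x(4)] by simp
        have dD: "int E + int d = int D" using Eu x(5) ed by simp
        have ku: "Poly_Mapping.keys (xmon u :: hmon \<Rightarrow>\<^sub>0 'k) \<subseteq> mons n M E"
          unfolding xmon_def mons_def using x(4) Eu by simp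
        obtain q where q: "Poly_Mapping.keys q \<subseteq> bset n M lt G D d" "xmon u - q \<in> I"
          using claimB[OF dD ku] by blast
        have qE: "Poly_Mapping.keys q \<subseteq> mons n M E"
        proof
          fix s assume "s \<in> Poly_Mapping.keys q"
          then have "s \<in> SMh n M" "snd s + int d = int D" using q(1) unfolding bset_def by blast+
          then show "s \<in> mons n M E" unfolding mons_def using dD by simp
        qed
        have x2: "x = q * f + (xmon u - q) * f" using x(1) hf by (simp add: algebra_simps)
        have "(xmon u - q) * f \<in> I" using I_mult[OF fh(1) q(2)] by (simp add: mult.commute)
        moreover have "Poly_Mapping.keys ((xmon u - q) * f) \<subseteq> mons n M D"
        proof -
          have k1: "Poly_Mapping.keys (xmon u - q) \<subseteq> mons n M E"
            using keys_diff[of "xmon u" q] ku qE by blast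
          have kf: "Poly_Mapping.keys f \<subseteq> SMh n M" using fh(1) keys_hring by blast
          have "Poly_Mapping.keys ((xmon u - q) * f) \<subseteq> SMh n M"
            using keys_mult_SMh[OF _ kf] k1 mons_SMh by blast
          moreover have "\<forall>m\<in>Poly_Mapping.keys ((xmon u - q) * f). snd m = int E + int d"
            using keys_mult_snd[of "xmon u - q" "int E" f "int d"] k1 fh(2)
            unfolding mons_def is_homog_def by blast
          ultimately show ?thesis using dD unfolding mons_def by auto
        qed
        ultimately have A: "(xmon u - q) * f \<in> lsp (?Rl @ ?Bl)" using claimA[OF phi] RL by blast
        have "q * f = (\<Sum>s\<in>Poly_Mapping.keys q. smul (Poly_Mapping.lookup q s) (xmon s) * f)"
          by (subst poly_expand[of q]) (simp add: sum_distrib_right)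
        also have "\<dots> = (\<Sum>s\<in>Poly_Mapping.keys q. smul (Poly_Mapping.lookup q s) (xmon s * f))"
          by (simp add: smul_mult)
        finally have qf: "q * f = (\<Sum>s\<in>Poly_Mapping.keys q. smul (Poly_Mapping.lookup q s) (xmon s * f))" .
        have "q * f \<in> lsp ?Bl"
          unfolding qf
        proof (rule lsp_sum)
          fix s assume "s \<in> Poly_Mapping.keys q"
          then have "xmon s * f \<in> set ?Bl" using q(1) sB by blast
          then show "smul (Poly_Mapping.lookup q s) (xmon s * f) \<in> lsp ?Bl" by (intro lsp_smul lsp_set)
        qed simp
        then have B: "q * f \<in> lsp (?Rl @ ?Bl)" using BL by blast
        show ?thesis using x2 lsp_add[OF B A] by simp
      qed
    qed
  qed
  show ?thesis using sub1 sub2 by blast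
qed

end




context sctx
begin

lemma indep_LM:
  fixes L :: "(hmon \<Rightarrow>\<^sub>0 'k) list"
  assumes nz: "\<And>i. i < length L \<Longrightarrow> L ! i \<noteq> 0"
    and ks: "\<And>i. i < length L \<Longrightarrow> Poly_Mapping.keys (L ! i) \<subseteq> SMh n M"
    and inj: "\<And>i j. i < length L \<Longrightarrow> j < length L \<Longrightarrow> i \<noteq> j \<Longrightarrow> LM n M lt (L ! i) \<noteq> LM n M lt (L ! j)"
    and s0: "(\<Sum>i<length L. smul (c i) (L ! i)) = 0"
  shows "\<forall>i<length L. c i = 0"
proof (rule ccontr)
  assume "\<not> (\<forall>i<length L. c i = 0)"
  define S where "S = {i. i < length L \<and> c i \<noteq> 0}"
  have S: "S \<noteq> {}" "finite S" using \<open>\<not> (\<forall>i<length L. c i = 0)\<close> unfolding S_def by auto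
  define X where "X = (\<lambda>i. LM n M lt (L ! i)) ` S"
  have XS: "X \<subseteq> SMh n M"
  proof
    fix x assume "x \<in> X"
    then obtain i where i: "i \<in> S" "x = LM n M lt (L ! i)" unfolding X_def by blast
    have il: "i < length L" using i(1) unfolding S_def by blast
    show "x \<in> SMh n M" using LM_props(1)[OF mo ks[OF il] nz[OF il]] ks[OF il] i(2) by blast
  qed
  obtain m where m: "m \<in> X" "\<forall>m'\<in>X. m' \<noteq> m \<longrightarrow> hless n M lt m' m"
    using finite_max[OF mo _ _ XS] S unfolding X_def by blast
  obtain i0 where i0: "i0 \<in> S" "m = LM n M lt (L ! i0)" using m(1) unfolding X_def by blast
  have i0l: "i0 < length L" "c i0 \<noteq> 0" using i0(1) unfolding S_def by auto
  have terms: "c i * Poly_Mapping.lookup (L ! i) m = (if i = i0 then c i0 * Poly_Mapping.lookup (L ! i0) m else 0)"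
    if i: "i < length L" for i
  proof (cases "i = i0")
    case True then show ?thesis by simp
  next
    case False
    show ?thesis
    proof (cases "c i = 0")
      case True then show ?thesis using False by simp
    next
      case ci: False
      then have "i \<in> S" unfolding S_def using i by blast
      then have "LM n M lt (L ! i) \<in> X" unfolding X_def by blast
      moreover have "LM n M lt (L ! i) \<noteq> m" using inj[OF i i0l(1) False] i0(2) by simp
      ultimately have h: "hless n M lt (LM n M lt (L ! i)) m" using m(2) by blast
      have "m \<notin> Poly_Mapping.keys (L ! i)" using LM_le[OF mo ks[OF i]] h by blast
      then show ?thesis using False by (simp add: in_keys_iff)
    qed
  qed
  have "0 = Poly_Mapping.lookup (\<Sum>i<length L. smul (c i) (L ! i)) m" using s0 by simp
  also have "\<dots> = (\<Sum>i<length L. c i * Poly_Mapping.lookup (L ! i) m)" by (simp add: lookup_sum lookup_smul)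
  also have "\<dots> = (\<Sum>i<length L. if i = i0 then c i0 * Poly_Mapping.lookup (L ! i0) m else 0)"
    by (intro sum.cong) (auto simp: terms)
  also have "\<dots> = c i0 * Poly_Mapping.lookup (L ! i0) m" using i0l(1) by simp
  finally have z: "c i0 * Poly_Mapping.lookup (L ! i0) m = 0" by simp
  have "Poly_Mapping.lookup (L ! i0) m \<noteq> 0"
    using LM_props(1)[OF mo ks[OF i0l(1)] nz[OF i0l(1)]] i0(2) by (simp add: in_keys_iff)
  then show False using z i0l(2) by simp
qed

lemma indep_main:
  assumes phi: "\<forall>m\<in>Nset n M lt G D. \<phi> m \<in> G \<and> \<phi> m \<noteq> 0 \<and> ddvd n M (LM n M lt (\<phi> m)) m"
    and f: "f \<in> hpart n M d" and nzd: "nonzerodivisor_mod n M I f"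
    and s0: "(\<Sum>i<length (enum_set (Rset n M lt G D \<phi>) @ enum_set {xmon s * f | s. s \<in> bset n M lt G D d}).
       smul (c i) ((enum_set (Rset n M lt G D \<phi>) @ enum_set {xmon s * f | s. s \<in> bset n M lt G D d}) ! i)) = 0"
  shows "\<forall>i<length (enum_set (Rset n M lt G D \<phi>) @ enum_set {xmon s * f | s. s \<in> bset n M lt G D d}). c i = 0"
proof -
  let ?R = "Rset n M lt G D \<phi>"
  let ?B = "bset n M lt G D d"
  let ?Bf = "{xmon s * f | s. s \<in> ?B}"
  let ?Rl = "enum_set ?R"
  let ?Bl = "enum_set ?Bf"
  define a where "a = length ?Rl"
  define b where "b = length ?Bl"
  have sR: "set ?Rl = ?R" "distinct ?Rl" using enum_set[OF finite_Rset] by blast+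
  have sB: "set ?Bl = ?Bf" "distinct ?Bl" using enum_set[OF finite_Bf] by blast+
  have fh: "f \<in> hring n M" using f unfolding hpart_def by auto
  define Rs where "Rs = (\<Sum>i<a. smul (c i) (?Rl ! i))"
  define Bs where "Bs = (\<Sum>j<b. smul (c (a + j)) (?Bl ! j))"
  have split: "Rs + Bs = 0"
  proof -
    have "(\<Sum>i<a + b. smul (c i) ((?Rl @ ?Bl) ! i)) = 0" using s0 unfolding a_def b_def by simp
    then have "(\<Sum>i<a. smul (c i) ((?Rl @ ?Bl) ! i)) + (\<Sum>j<b. smul (c (a + j)) ((?Rl @ ?Bl) ! (a + j))) = 0"
      by (simp only: sum_split_add)
    moreover have "(\<Sum>i<a. smul (c i) ((?Rl @ ?Bl) ! i)) = Rs"
      unfolding Rs_def by (intro sum.cong) (auto simp: nth_append a_def)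
    moreover have "(\<Sum>j<b. smul (c (a + j)) ((?Rl @ ?Bl) ! (a + j))) = Bs"
      unfolding Bs_def by (intro sum.cong) (auto simp: nth_append a_def)
    ultimately show ?thesis by simp
  qed
  have RI: "?Rl ! i \<in> ?R" if "i < a" for i
  proof -
    have "?Rl ! i \<in> set ?Rl" using that unfolding a_def by (rule nth_mem)
    then show ?thesis using sR(1) by simp
  qed
  have RsI: "Rs \<in> I" unfolding Rs_def
    by (rule I_sum) (auto intro!: I_smul Rset_elem(1)[OF phi RI])
  have "- Rs = Bs" using split by (simp only: neg_eq_iff_add_eq_0)
  then have BsI: "Bs \<in> I" using I_neg[OF RsI] by simp
  have exs: "\<exists>s. s \<in> ?B \<and> ?Bl ! j = xmon s * f" if "j < b" for j
  proof -
    have "?Bl ! j \<in> set ?Bl" using that unfolding b_def by (rule nth_mem)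
    then have "?Bl ! j \<in> ?Bf" using sB(1) by simp
    then show ?thesis by blast
  qed
  define sj where "sj = (\<lambda>j. SOME s. s \<in> ?B \<and> ?Bl ! j = xmon s * f)"
  have sj: "sj j \<in> ?B" "?Bl ! j = xmon (sj j) * f" if "j < b" for j
    using someI_ex[OF exs[OF that]] unfolding sj_def by blast+
  have sjinj: "j = j'" if "j < b" "j' < b" "sj j = sj j'" for j j'
  proof -
    have "?Bl ! j = ?Bl ! j'" using sj(2)[OF that(1)] sj(2)[OF that(2)] that(3) by simp
    then show ?thesis using nth_eq_iff_index_eq[OF sB(2)] that unfolding b_def by blast
  qed
  define q where "q = (\<Sum>j<b. smul (c (a + j)) (xmon (sj j)))"
  have qf: "q * f = Bs"
  proof -
    have "q * f = (\<Sum>j<b. smul (c (a + j)) (xmon (sj j) * f))"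
      unfolding q_def by (simp add: sum_distrib_right smul_mult)
    also have "\<dots> = Bs" unfolding Bs_def
    proof (rule sum.cong[OF refl])
      fix j assume "j \<in> {..<b}"
      then have "?Bl ! j = xmon (sj j) * f" using sj(2) by blast
      then show "smul (c (a + j)) (xmon (sj j) * f) = smul (c (a + j)) (?Bl ! j)" by (simp only:)
    qed
    finally show ?thesis .
  qed
  have kq: "Poly_Mapping.keys q \<subseteq> ?B"
  proof
    fix s assume s: "s \<in> Poly_Mapping.keys q"
    have "Poly_Mapping.keys q \<subseteq> (\<Union>j\<in>{..<b}. Poly_Mapping.keys (smul (c (a + j)) (xmon (sj j))))"
      unfolding q_def by (rule keys_sum)
    then obtain j where j: "j < b" "s \<in> Poly_Mapping.keys (smul (c (a + j)) (xmon (sj j)))"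
      using s by blast
    have "Poly_Mapping.keys (smul (c (a + j)) (xmon (sj j))) \<subseteq> Poly_Mapping.keys (xmon (sj j) :: hmon \<Rightarrow>\<^sub>0 'k)"
      by (rule keys_smul)
    moreover have "Poly_Mapping.keys (xmon (sj j) :: hmon \<Rightarrow>\<^sub>0 'k) = {sj j}" unfolding xmon_def by simp
    ultimately have "s = sj j" using j(2) by blast
    then show "s \<in> ?B" using sj(1)[OF j(1)] by simp
  qed
  have qh: "q \<in> hring n M" unfolding hring_def using kq unfolding bset_def by blast
  have "f * q \<in> I" using qf BsI by (simp add: mult.commute)
  then have qI: "q \<in> I" using nzd qh unfolding nonzerodivisor_mod_def by blast
  have q0: "q = 0"
  proof (rule ccontr)
    assume nq: "q \<noteq> 0"
    obtain g where "g \<in> G" "g \<noteq> 0" "ddvd n M (LM n M lt g) (LM n M lt q)"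
      using GB qI nq unfolding sparse_GB_def by blast
    moreover have "LM n M lt q \<in> ?B" using LM_props(1)[OF mo I_hring[OF qI] nq] kq by blast
    ultimately show False unfolding bset_def by blast
  qed
  have cB: "c (a + j) = 0" if j: "j < b" for j
  proof -
    have "Poly_Mapping.lookup q (sj j) = (\<Sum>j'<b. if j' = j then c (a + j) else 0)"
      unfolding q_def lookup_sum smul_xmon
      by (intro sum.cong refl) (auto simp: lookup_single when_def dest: sjinj[OF _ j])
    also have "\<dots> = c (a + j)" using j by simp
    finally show ?thesis using q0 by simp
  qed
  have "Bs = 0" unfolding Bs_def using cB by simp
  then have Rs0: "Rs = 0" using split by simp
  have cR: "\<forall>i<length ?Rl. c i = 0"
  proof (rule indep_LM)
    fix i assume i: "i < length ?Rl"
    then have r: "?Rl ! i \<in> ?R" using RI a_def by simp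
    show "?Rl ! i \<noteq> 0" using Rset_elem(2)[OF phi r] .
    show "Poly_Mapping.keys (?Rl ! i) \<subseteq> SMh n M" using Rset_elem(3)[OF phi r] mons_SMh by blast
  next
    fix i j assume ij: "i < length ?Rl" "j < length ?Rl" "i \<noteq> j"
    have r: "?Rl ! i \<in> ?R" "?Rl ! j \<in> ?R" using RI a_def ij by auto
    show "LM n M lt (?Rl ! i) \<noteq> LM n M lt (?Rl ! j)"
    proof
      assume e: "LM n M lt (?Rl ! i) = LM n M lt (?Rl ! j)"
      have "?Rl ! i = ?Rl ! j" using Rset_elem(4)[OF phi r(1)] Rset_elem(4)[OF phi r(2)] e by metis
      then show False using nth_eq_iff_index_eq[OF sR(2) ij(1,2)] ij(3) by blast
    qed
  next
    show "(\<Sum>i<length ?Rl. smul (c i) (?Rl ! i)) = 0" using Rs0 unfolding Rs_def a_def .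
  qed
  show ?thesis
  proof (intro allI impI)
    fix i assume "i < length (?Rl @ ?Bl)"
    then have i: "i < a + b" unfolding a_def b_def by simp
    show "c i = 0"
    proof (cases "i < a")
      case True then show ?thesis using cR a_def by simp
    next
      case False
      then obtain j where "i = a + j" "j < b" using i by (metis add_diff_inverse_nat add_less_cancel_left)
      then show ?thesis using cB by simp
    qed
  qed
qed

end



theorem mainTheorem10:
  fixes n :: nat and M :: "(nat \<Rightarrow> real) set" and lt :: "zvec \<Rightarrow> zvec \<Rightarrow> bool"
    and I G :: "(hmon \<Rightarrow>\<^sub>0 'k::field_char_0) set" and f :: "hmon \<Rightarrow>\<^sub>0 'k"
    and D d :: nat and \<phi> :: "hmon \<Rightarrow> (hmon \<Rightarrow>\<^sub>0 'k)"
  assumes "polytope n M" and "(\<lambda>_. 0) \<in> M"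
    and "pointed (SM n M)" and "pointed (SMh n M)"
    and "monomial_order n M lt"
    and "homog_ideal n M I"
    and "sparse_GB n M lt I G" and "finite G" and "\<forall>g\<in>G. homogeneous g"
    and "\<forall>m\<in>Nset n M lt G D. \<phi> m \<in> G \<and> \<phi> m \<noteq> 0 \<and> ddvd n M (LM n M lt (\<phi> m)) m"
    and "f \<in> hpart n M d"
  shows "Rows (col_list n M lt D) (rref (Mstar_mat n M lt G D \<phi> d f))
           = Rows (col_list n M lt D) (rref (MD_mat n M lt G D f))
         \<and> (nonzerodivisor_mod n M I f \<longrightarrow> full_rank (Mstar_mat n M lt G D \<phi> d f))"
proof -
  note poly = assms(1) and mo = assms(5) and GB = assms(7) and fG = assms(8) and homG = assms(9)
    and phi = assms(10) and f = assms(11)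
  have Iid: "is_ideal n M I" using assms(6) unfolding homog_ideal_def by blast
  interpret sctx n M lt I G using poly mo Iid GB homG by unfold_locales
  let ?cs = "col_list n M lt D"
  have cs: "set ?cs = mons n M D" "distinct ?cs" using col_list[OF mo poly] by blast+
  let ?R = "Rset n M lt G D \<phi>"
  let ?Bf = "{xmon s * f | s. s \<in> bset n M lt G D d}"
  let ?MD = "{xmon u * h | u h e. h \<in> G \<union> {f} \<and> is_homog e h \<and> u \<in> SMh n M \<and> snd u + int e = int D}"
  let ?Rl = "enum_set ?R"
  let ?Bl = "enum_set ?Bf"
  let ?Ml = "enum_set ?MD"
  have sR: "set ?Rl = ?R" using enum_set[OF finite_Rset] by blast
  have sB: "set ?Bl = ?Bf" using enum_set[OF finite_Bf] by blast
  have sM: "set ?Ml = ?MD" using enum_set[OF finite_MD[OF fG]] by blast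
  have fh: "is_homog d f" using f unfolding hpart_def by auto
  have ks2: "\<forall>p\<in>set ?Ml. Poly_Mapping.keys p \<subseteq> set ?cs"
  proof
    fix p assume "p \<in> set ?Ml"
    then have "p \<in> ?MD" using sM by simp
    then show "Poly_Mapping.keys p \<subseteq> set ?cs" using MD_keys[OF f, of p] cs(1) by simp
  qed
  have ks1: "\<forall>p\<in>set (?Rl @ ?Bl). Poly_Mapping.keys p \<subseteq> set ?cs"
  proof
    fix p assume "p \<in> set (?Rl @ ?Bl)"
    then have "p \<in> ?R \<or> p \<in> ?Bf" using sR sB by simp
    then show "Poly_Mapping.keys p \<subseteq> set ?cs"
    proof
      assume "p \<in> ?R"
      then show ?thesis using Rset_elem(3)[OF phi \<open>p \<in> ?R\<close>] cs(1) by simp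
    next
      assume "p \<in> ?Bf"
      then obtain s where s: "p = xmon s * f" "s \<in> bset n M lt G D d" by blast
      have "s \<in> SMh n M" "snd s + int d = int D" using s(2) unfolding bset_def by blast+
      then have "\<exists>u h e. p = xmon u * h \<and> h \<in> G \<union> {f} \<and> is_homog e h \<and> u \<in> SMh n M \<and> snd u + int e = int D"
        using s(1) fh by (intro exI[of _ s] exI[of _ f] exI[of _ d]) simp
      then have "p \<in> ?MD" by blast
      then show ?thesis using MD_keys[OF f, of p] cs(1) by simp
    qed
  qed
  have Mstar: "Mstar_mat n M lt G D \<phi> d f = macaulay ?cs (?Rl @ ?Bl)" unfolding Mstar_mat_def ..
  have MDm: "MD_mat n M lt G D f = macaulay ?cs ?Ml" unfolding MD_mat_def ..
  have RS: "RS (macaulay ?cs (?Rl @ ?Bl)) = RS (macaulay ?cs ?Ml)"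
    using RS_macaulay_eq[OF cs(2) ks1 ks2 lsp_eq[OF phi f fG]] .
  have P1: "Rows ?cs (rref (Mstar_mat n M lt G D \<phi> d f)) = Rows ?cs (rref (MD_mat n M lt G D f))"
    unfolding Mstar MDm using Rows_rref_eq[OF cs(2) macaulay_carrier macaulay_carrier RS] .
  have P2: "full_rank (Mstar_mat n M lt G D \<phi> d f)" if nzd: "nonzerodivisor_mod n M I f"
    unfolding Mstar
  proof (rule full_rank_macaulay[OF cs(2) ks1])
    fix c assume "(\<Sum>i<length (?Rl @ ?Bl). smul (c i) ((?Rl @ ?Bl) ! i)) = 0"
    then show "\<forall>i<length (?Rl @ ?Bl). c i = 0" using indep_main[OF phi f nzd] by blast
  qed
  show ?thesis using P1 P2 by blast
qed

end
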